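(* Consider an ergodic Jackson network process $\mathbf{X}$ (setting in the context) with stationary distribution $\xi(\mathbf{n})=\prod_{j=1}^{J}\prod_{k=1}^{n_j}\frac{\eta_j}{\mu_j(k)}C(j)^{-1}$. Let $\boldsymbol{\gamma}\in[0,\infty)^{\overline{J}}$, define $\boldsymbol{\alpha}=(\alpha_j:j\in\overline{J}_0)$ and $\beta$ as in the context, and let $r^{(\boldsymbol{\alpha})}=(r^{(\boldsymbol{\alpha})}(i,j):i,j\in\overline{J}_0)$ be any stochastic matrix having $(\alpha_j\eta_j:j\in\overline{J}_0)$ as an invariant measure. Let $\mathbf{X}^{(\boldsymbol{\gamma})}$ be the continuous-time Markov chain on $\mathbb{N}_0^{\overline{J}}$ whose positive rates are $q(\mathbf{n},\mathbf{n}+\mathbf{e}_i)=\beta\lambda r^{(\boldsymbol{\alpha})}(0,i)$ for $i\in\overline{J}$, $q(\mathbf{n},\mathbf{n}-\mathbf{e}_j+\mathbf{e}_i)=1_{[n_j>0]}\gamma_j\mu_j(n_j)r^{(\boldsymbol{\alpha})}(j,i)$ for $i\ne j$ in $\overline{J}$, and $q(\mathbf{n},\mathbf{n}-\mathbf{e}_j)=1_{[n_j>0]}\gamma_j\mu_j(n_j)r^{(\boldsymbol{\alpha})}(j,0)$. Let $B(\boldsymbol{\gamma})=\{j\in\overline{J}:\gamma_j=0\}$, $W(\boldsymbol{\gamma})=\overline{J}\setminus B(\boldsymbol{\gamma})$. Then $\xi$ is a stationary distribution of $\mathbf{X}^{(\boldsymbol{\gamma})}$. If $B(\boldsymbol{\gamma})=\emptyset$,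 then $\mathbf{X}^{(\boldsymbol{\gamma})}$ is ergodic. If $B(\boldsymbol{\gamma})\ne\emptyset$, then $\mathbf{X}^{(\boldsymbol{\gamma})}$ is not irreducible on $\mathbb{N}_0^{\overline{J}}$, its state space splits into the infinitely many closed subspaces $\mathbb{N}_0^{W(\boldsymbol{\gamma})}\times\{(n_j:j\in B(\boldsymbol{\gamma}))\}$, and for every probability distribution $\varphi$ on $\mathbb{N}_0^{B(\boldsymbol{\gamma})}$, \[ \xi^{(\boldsymbol{\gamma})}_\varphi(\mathbf{n})=\prod_{j\in W(\boldsymbol{\gamma})}\prod_{k=1}^{n_j}\frac{\eta_j}{\mu_j(k)}C(j)^{-1}\cdot\varphi(n_j:j\in B(\boldsymbol{\gamma})) \] is a stationary distribution of $\mathbf{X}^{(\boldsymbol{\gamma})}$.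
   Context: Jackson network setting: node set $\overline{J}=\{1,\dots,J\}$, extended node set $\overline{J}_0=\{0,\dots,J\}$. External Poisson arrival rates $\lambda_j\ge0$, $\lambda=\sum_j\lambda_j>0$; service intensities $\mu_j(n)>0$ for $n\ge1$. Extended routing matrix $r$ on $\overline{J}_0$ is stochastic and irreducible with $r(0,j)=\lambda_j/\lambda$, $r(0,0)=0$; $\eta$ with $\eta_0=\lambda$ solves $\eta_j=\sum_{i\in\overline{J}_0}\eta_i r(i,j)$, $j\in\overline{J}_0$. $\mathbf{X}$ is the Markov chain on $\mathbb{N}_0^{\overline{J}}$ with rates $\lambda r(0,i)$ for $\mathbf{n}\to\mathbf{n}+\mathbf{e}_i$, $1_{[n_j>0]}\mu_j(n_j)r(j,i)$ for $\mathbf{n}\to\mathbf{n}-\mathbf{e}_j+\mathbf{e}_i$ ($i\ne j$), $1_{[n_j>0]}\mu_j(n_j)r(j,0)$ for $\mathbf{n}\to\mathbf{n}-\mathbf{e}_j$; assumed ergodic, with $C(j)=\sum_{n\ge0}\prod_{k=1}^n\eta_j/\mu_j(k)<\infty$. Given $\boldsymbol{\gamma}$, $\|\boldsymbol{\gamma}\|_\infty=\max_j\gamma_j$: $\alpha_0=1$; $\alpha_j=\gamma_j$ ($j\in\overline{J}$) if $\|\boldsymbol{\gamma}\|_\infty\le1$ and $\alpha_j=\gamma_j/\|\boldsymbol{\gamma}\|_\infty$ otherwise; $\beta=1$ if $\|\boldsymbol{\gamma}\|_\infty\le1$ and $\beta=\|\boldsymbol{\gamma}\|_\infty$ otherwi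se.
   Formalization: The ergodicity of $\mathbf{X}^{(\boldsymbol{\gamma})}$ when $B(\boldsymbol{\gamma})=\emptyset$ is claimed only when the stochastic matrix $r^{(\boldsymbol{\alpha})}$ is also irreducible on $\overline{J}_0$. The statement above fails without it. *)

theory Defs
  imports "HOL-Analysis.Analysis"
begin

definition outrate :: "'s set \<Rightarrow> ('s \<Rightarrow> 's \<Rightarrow> real) \<Rightarrow> 's \<Rightarrow> real" where
  "outrate S q x = infsum (\<lambda>y. q x y) (S - {x})"

definition stationary_dist :: "'s set \<Rightarrow> ('s \<Rightarrow> 's \<Rightarrow> real) \<Rightarrow> ('s \<Rightarrow> real) \<Rightarrow> bool" where
  "stationary_dist S q p \<longleftrightarrow>
     (\<forall>x\<in>S. 0 \<le> p x) \<and> (p has_sum 1) S \<and>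
     (\<forall>x\<in>S. ((\<lambda>y. p y * q y x) has_sum (p x * outrate S q x)) (S - {x}))"

definition trans_rel :: "'s set \<Rightarrow> ('s \<Rightarrow> 's \<Rightarrow> real) \<Rightarrow> ('s \<times> 's) set" where
  "trans_rel S q = {(x, y). x \<in> S \<and> y \<in> S \<and> x \<noteq> y \<and> q x y > 0}"

definition irreducible_ctmc :: "'s set \<Rightarrow> ('s \<Rightarrow> 's \<Rightarrow> real) \<Rightarrow> bool" where
  "irreducible_ctmc S q \<longleftrightarrow> (\<forall>x\<in>S. \<forall>y\<in>S. (x, y) \<in> (trans_rel S q)\<^sup>*)"

definition closed_set :: "'s set \<Rightarrow> ('s \<Rightarrow> 's \<Rightarrow> real) \<Rightarrow> 's set \<Rightarrow> bool" where
  "closed_set S q C \<longleftrightarrow> C \<subseteq> S \<and> (\<forall>x\<in>C. \<forall>y\<in>S - C. q x y = 0)"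

definition jump_prob :: "'s set \<Rightarrow> ('s \<Rightarrow> 's \<Rightarrow> real) \<Rightarrow> 's \<Rightarrow> 's \<Rightarrow> real" where
  "jump_prob S q x y = q x y / outrate S q x"

fun path_weight :: "('s \<Rightarrow> 's \<Rightarrow> real) \<Rightarrow> 's list \<Rightarrow> real" where
  "path_weight P (a # b # rest) = P a b * path_weight P (b # rest)"
| "path_weight P _ = 1"

text \<open>First-return excursions from x: x, ys, x with all ys in S - {x}.
  Recurrence: the jump chain returns to x with probability 1.
  Positive recurrence: additionally the expected return time
  (sum of the expected holding times 1/q(z) along the excursion) is finite.\<close>
definition positive_recurrent :: "'s set \<Rightarrow> ('s \<Rightarrow> 's \<Rightarrow> real) \<Rightarrow> 's \<Rightarrow> bool" where
  "positive_recurrent S q x \<longleftrightarrow>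
     0 < outrate S q x \<and>
     ((\<lambda>ys. path_weight (jump_prob S q) (x # ys @ [x])) has_sum 1) (lists (S - {x})) \<and>
     (\<lambda>ys. path_weight (jump_prob S q) (x # ys @ [x]) *
            sum_list (map (\<lambda>z. 1 / outrate S q z) (x # ys))) summable_on (lists (S - {x}))"

definition ergodic_ctmc :: "'s set \<Rightarrow> ('s \<Rightarrow> 's \<Rightarrow> real) \<Rightarrow> bool" where
  "ergodic_ctmc S q \<longleftrightarrow> irreducible_ctmc S q \<and> (\<forall>x\<in>S. positive_recurrent S q x)"

text \<open>States n \<in> N_0^{1..J} are represented as functions nat \<Rightarrow> nat vanishing outside {1..J}.\<close>
definition jstates :: "nat \<Rightarrow> (nat \<Rightarrow> nat) set" where
  "jstates J = {n. \<forall>j. j \<notin> {1..J} \<longrightarrow> n j = 0}"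

text \<open>Rates of a Jackson-type network with external arrival rates a i to node i,
  service intensities s j k at node j with k customers, and routing matrix rt on {0..J}.\<close>
definition jackson_q ::
  "nat \<Rightarrow> (nat \<Rightarrow> real) \<Rightarrow> (nat \<Rightarrow> nat \<Rightarrow> real) \<Rightarrow> (nat \<Rightarrow> nat \<Rightarrow> real)
     \<Rightarrow> (nat \<Rightarrow> nat) \<Rightarrow> (nat \<Rightarrow> nat) \<Rightarrow> real" where
  "jackson_q J a s rt n m =
     (\<Sum>i\<in>{1..J}. if m = n(i := n i + 1) then a i else 0)
   + (\<Sum>j\<in>{1..J}. \<Sum>i\<in>{1..J}.
        if i \<noteq> j \<and> 0 < n j \<and> m = n(j := n j - 1, i := n i + 1) then s j (n j) * rt j i else 0)
   + (\<Sum>j\<in>{1..J}. if 0 < n j \<and> m = n(j := n j - 1) then s j (n j) * rt j 0 else 0)"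

definition stochastic_on :: "nat \<Rightarrow> (nat \<Rightarrow> nat \<Rightarrow> real) \<Rightarrow> bool" where
  "stochastic_on J r \<longleftrightarrow> (\<forall>i\<in>{0..J}. \<forall>j\<in>{0..J}. 0 \<le> r i j) \<and> (\<forall>i\<in>{0..J}. (\<Sum>j\<in>{0..J}. r i j) = 1)"

definition irreducible_matrix :: "nat \<Rightarrow> (nat \<Rightarrow> nat \<Rightarrow> real) \<Rightarrow> bool" where
  "irreducible_matrix J r \<longleftrightarrow>
     (\<forall>i\<in>{0..J}. \<forall>j\<in>{0..J}. (i, j) \<in> {(a, b). a \<in> {0..J} \<and> b \<in> {0..J} \<and> 0 < r a b}\<^sup>*)"

definition invariant_measure :: "nat \<Rightarrow> (nat \<Rightarrow> nat \<Rightarrow> real) \<Rightarrow> (nat \<Rightarrow> real) \<Rightarrow> bool" where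
  "invariant_measure J r m \<longleftrightarrow> (\<forall>j\<in>{0..J}. m j = (\<Sum>i\<in>{0..J}. m i * r i j))"

definition normC :: "(nat \<Rightarrow> real) \<Rightarrow> (nat \<Rightarrow> nat \<Rightarrow> real) \<Rightarrow> nat \<Rightarrow> real" where
  "normC \<eta> \<mu> j = (\<Sum>n. \<Prod>k\<in>{1..n}. \<eta> j / \<mu> j k)"

definition node_factor :: "(nat \<Rightarrow> real) \<Rightarrow> (nat \<Rightarrow> nat \<Rightarrow> real) \<Rightarrow> nat \<Rightarrow> nat \<Rightarrow> real" where
  "node_factor \<eta> \<mu> j nj = (\<Prod>k\<in>{1..nj}. \<eta> j / \<mu> j k) / normC \<eta> \<mu> j"

definition jackson_xi :: "nat \<Rightarrow> (nat \<Rightarrow> real) \<Rightarrow> (nat \<Rightarrow> nat \<Rightarrow> real) \<Rightarrow> (nat \<Rightarrow> nat) \<Rightarrow> real" where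
  "jackson_xi J \<eta> \<mu> n = (\<Prod>j\<in>{1..J}. node_factor \<eta> \<mu> j (n j))"

definition gmax :: "nat \<Rightarrow> (nat \<Rightarrow> real) \<Rightarrow> real" where
  "gmax J \<gamma> = Max (\<gamma> ` {1..J})"

definition alpha :: "nat \<Rightarrow> (nat \<Rightarrow> real) \<Rightarrow> nat \<Rightarrow> real" where
  "alpha J \<gamma> j = (if j = 0 then 1 else if gmax J \<gamma> \<le> 1 then \<gamma> j else \<gamma> j / gmax J \<gamma>)"

definition beta :: "nat \<Rightarrow> (nat \<Rightarrow> real) \<Rightarrow> real" where
  "beta J \<gamma> = (if gmax J \<gamma> \<le> 1 then 1 else gmax J \<gamma>)"

definition Bset :: "nat \<Rightarrow> (nat \<Rightarrow> real) \<Rightarrow> nat set" where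
  "Bset J \<gamma> = {j \<in> {1..J}. \<gamma> j = 0}"

definition Wset :: "nat \<Rightarrow> (nat \<Rightarrow> real) \<Rightarrow> nat set" where
  "Wset J \<gamma> = {1..J} - Bset J \<gamma>"

definition jackson_q_gamma ::
  "nat \<Rightarrow> real \<Rightarrow> (nat \<Rightarrow> real) \<Rightarrow> (nat \<Rightarrow> nat \<Rightarrow> real) \<Rightarrow> (nat \<Rightarrow> nat \<Rightarrow> real)
     \<Rightarrow> (nat \<Rightarrow> nat) \<Rightarrow> (nat \<Rightarrow> nat) \<Rightarrow> real" where
  "jackson_q_gamma J lam \<gamma> \<mu> ra =
     jackson_q J (\<lambda>i. beta J \<gamma> * lam * ra 0 i) (\<lambda>j k. \<gamma> j * \<mu> j k) ra"

end

theory Submission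
  imports Defs
begin

lemma has_sum_diff':
  fixes f g :: "'a \<Rightarrow> real"
  assumes "(f has_sum a) A" "(g has_sum b) A"
  shows "((\<lambda>x. f x - g x) has_sum (a - b)) A"
proof -
  have "((\<lambda>x. - g x) has_sum (- b)) A" using assms(2) by (simp add: has_sum_uminus)
  from has_sum_add[OF assms(1) this] show ?thesis by simp
qed

lemma has_sum_finsum:
  fixes f :: "'i \<Rightarrow> 'a \<Rightarrow> real"
  assumes "finite I" "\<And>i. i \<in> I \<Longrightarrow> (f i has_sum s i) A"
  shows "((\<lambda>x. \<Sum>i\<in>I. f i x) has_sum (\<Sum>i\<in>I. s i)) A"
  using assms
proof (induction I rule: finite_induct)
  case empty then show ?case by simp
next
  case (insert i I)
  have "((\<lambda>x. f i x + (\<Sum>i\<in>I. f i x)) has_sum (s i + (\<Sum>i\<in>I. s i))) A"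
    by (rule has_sum_add) (use insert in auto)
  then show ?case using insert by simp
qed

lemma has_sum_single:
  fixes c :: real
  assumes "t \<in> A"
  shows "((\<lambda>m. if m = t then c else 0) has_sum c) A"
  by (rule has_sum_finite_neutralI[of "{t}"]) (use assms in auto)

lemma has_sum_remove_point:
  fixes f :: "'a \<Rightarrow> real"
  assumes "(f has_sum a) A" "x \<in> A"
  shows "(f has_sum (a - f x)) (A - {x})"
proof -
  have "(f has_sum f x) {x}" by (rule has_sum_finiteI) auto
  from has_sum_Diff[OF assms(1) this] assms(2) show ?thesis by auto
qed

lemma has_sum_add_zero_point:
  fixes f :: "'a \<Rightarrow> real"
  assumes "(f has_sum a) (A - {x})" "f x = 0"
  shows "(f has_sum a) A"
proof -
  have "(f has_sum a) (A - {x}) \<longleftrightarrow> (f has_sum a) A"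
    by (rule has_sum_cong_neutral) (use assms(2) in auto)
  with assms(1) show ?thesis by simp
qed



lemma has_sum_by_length:
  fixes f :: "'a list \<Rightarrow> real"
  assumes fin: "\<And>n. finite (Q n)" and sub: "\<And>n. Q n \<subseteq> {ys\<in>A. length ys = n}"
    and zero: "\<And>ys. ys \<in> A \<Longrightarrow> ys \<notin> Q (length ys) \<Longrightarrow> f ys = 0"
    and nn: "\<And>ys. ys \<in> A \<Longrightarrow> 0 \<le> f ys"
    and sm: "(\<lambda>n. sum f (Q n)) sums s"
  shows "(f has_sum s) A"
proof -
  define U where "U = (\<Union>n. Q n)"
  have UA: "U \<subseteq> A" using sub by (auto simp: U_def)
  have cong: "(f has_sum s) U \<longleftrightarrow> (f has_sum s) A"
  proof (rule has_sum_cong_neutral)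
    fix ys assume "ys \<in> A - U"
    then show "f ys = 0" by (intro zero) (auto simp: U_def)
  qed (use UA in auto)
  have bij: "bij_betw snd (Sigma UNIV Q) U"
    unfolding bij_betw_def
  proof
    show "inj_on snd (Sigma UNIV Q)"
    proof (rule inj_onI)
      fix a b assume "a \<in> Sigma UNIV Q" "b \<in> Sigma UNIV Q" "snd a = snd b"
      then obtain n1 ys1 n2 ys2 where a: "a = (n1, ys1)" "ys1 \<in> Q n1" and b: "b = (n2, ys2)" "ys2 \<in> Q n2"
        by auto
      with \<open>snd a = snd b\<close> have "ys1 = ys2" by simp
      moreover have "length ys1 = n1" "length ys2 = n2" using sub a b by auto
      ultimately show "a = b" using a b by simp
    qed
    show "snd ` Sigma UNIV Q = U" by (force simp: U_def)
  qed
  have nnU: "\<And>ys. ys \<in> U \<Longrightarrow> 0 \<le> f ys" using UA nn by auto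
  have inner: "\<And>n. n \<in> UNIV \<Longrightarrow> ((\<lambda>ys. f (snd (n, ys))) has_sum sum f (Q n)) (Q n)"
    using fin by (simp add: has_sum_finiteI)
  have nnQ: "\<And>n. 0 \<le> sum f (Q n)"
    using sub nn by (intro sum_nonneg) auto
  have outer: "((\<lambda>n. sum f (Q n)) has_sum s) UNIV"
    by (rule sums_nonneg_imp_has_sum[OF sm nnQ])
  have summ: "(\<lambda>p. f (snd p)) summable_on Sigma UNIV Q"
    by (rule summable_on_SigmaI[OF inner has_sum_imp_summable[OF outer]])
       (use sub nn in \<open>auto simp: subset_iff\<close>)
  have "((\<lambda>p. f (snd p)) has_sum s) (Sigma UNIV Q)"
    by (rule has_sum_SigmaI[OF inner outer summ])
  then have "(f has_sum s) U"
    using has_sum_reindex_bij_betw[OF bij, of f s] by simp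
  then show ?thesis using cong by simp
qed

locale jumpchain =
  fixes S :: "'s set" and q :: "'s \<Rightarrow> 's \<Rightarrow> real" and \<pi> :: "'s \<Rightarrow> real"
  assumes q_nonneg: "\<And>z y. z \<in> S \<Longrightarrow> y \<in> S \<Longrightarrow> 0 \<le> q z y"
    and q_diag: "\<And>z. z \<in> S \<Longrightarrow> q z z = 0"
    and succ_fin: "\<And>z. z \<in> S \<Longrightarrow> finite {y\<in>S. q z y \<noteq> 0}"
    and out_pos: "\<And>z. z \<in> S \<Longrightarrow> 0 < outrate S q z"
    and pi_nonneg: "\<And>z. z \<in> S \<Longrightarrow> 0 \<le> \<pi> z"
    and balance: "\<And>y. y \<in> S \<Longrightarrow> ((\<lambda>z. \<pi> z * q z y) has_sum (\<pi> y * outrate S q y)) (S - {y})"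
    and nu_summ: "(\<lambda>z. \<pi> z * outrate S q z) summable_on S"
    and pi_summ: "\<pi> summable_on S"
begin

definition Succ where "Succ z = {y\<in>S. q z y \<noteq> 0}"
abbreviation qo where "qo z \<equiv> outrate S q z"
abbreviation P where "P \<equiv> jump_prob S q"
definition nu where "nu z = \<pi> z * qo z"

lemma Succ_sub: "z \<in> S \<Longrightarrow> Succ z \<subseteq> S - {z}"
  using q_diag by (auto simp: Succ_def)

lemma fin_Succ: "z \<in> S \<Longrightarrow> finite (Succ z)"
  using succ_fin by (simp add: Succ_def)

lemma q_has_sum: "z \<in> S \<Longrightarrow> (q z has_sum (\<Sum>y\<in>Succ z. q z y)) (S - {z})"
  by (rule has_sum_finite_neutralI[of "Succ z"]) (use fin_Succ Succ_sub in \<open>auto simp: Succ_def\<close>)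

lemma qo_eq: "z \<in> S \<Longrightarrow> qo z = (\<Sum>y\<in>Succ z. q z y)"
  unfolding outrate_def using q_has_sum by (simp add: infsumI)

lemma P_nonneg: "z \<in> S \<Longrightarrow> y \<in> S \<Longrightarrow> 0 \<le> P z y"
  unfolding jump_prob_def by (intro divide_nonneg_pos q_nonneg out_pos)

lemma P_row: "z \<in> S \<Longrightarrow> (\<Sum>y\<in>Succ z. P z y) = 1"
  using out_pos[of z] qo_eq[of z]
  by (simp add: jump_prob_def sum_divide_distrib[symmetric])

lemma P_zero: "z \<in> S \<Longrightarrow> y \<in> S \<Longrightarrow> y \<notin> Succ z \<Longrightarrow> P z y = 0"
  by (simp add: Succ_def jump_prob_def)

lemma nu_P: "z \<in> S \<Longrightarrow> nu z * P z y = \<pi> z * q z y"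
  using out_pos[of z] by (simp add: nu_def jump_prob_def)

definition Kf :: "'s \<Rightarrow> ('s \<Rightarrow> real) \<Rightarrow> 's \<Rightarrow> real" where
  "Kf x h z = (\<Sum>y\<in>Succ z - {x}. P z y * h y)"

lemma Succ_diff_sub: "z \<in> S \<Longrightarrow> y \<in> Succ z - {x} \<Longrightarrow> y \<in> S - {x}"
  using Succ_sub by auto

lemma Kf_nonneg: "z \<in> S \<Longrightarrow> (\<And>y. y \<in> S - {x} \<Longrightarrow> 0 \<le> h y) \<Longrightarrow> 0 \<le> Kf x h z"
  unfolding Kf_def using Succ_diff_sub P_nonneg
  by (intro sum_nonneg mult_nonneg_nonneg) auto

lemma Kf_mono: "z \<in> S \<Longrightarrow> (\<And>y. y \<in> S - {x} \<Longrightarrow> h y \<le> g y) \<Longrightarrow> Kf x h z \<le> Kf x g z"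
  unfolding Kf_def using Succ_diff_sub P_nonneg
  by (intro sum_mono mult_left_mono) auto

lemma Kf_cong: "z \<in> S \<Longrightarrow> (\<And>y. y \<in> S - {x} \<Longrightarrow> h y = g y) \<Longrightarrow> Kf x h z = Kf x g z"
  unfolding Kf_def using Succ_diff_sub by (intro sum.cong) auto

lemma Kf_add: "Kf x (\<lambda>y. h y + g y) z = Kf x h z + Kf x g z"
  unfolding Kf_def by (simp add: distrib_left sum.distrib)

lemma Kf_sum: "Kf x (\<lambda>y. \<Sum>i\<in>I. g i y) z = (\<Sum>i\<in>I. Kf x (g i) z)"
  unfolding Kf_def by (simp add: sum_distrib_left sum.swap[of _ I])

lemma Kf_one_plus: "z \<in> S \<Longrightarrow> x \<in> S \<Longrightarrow> Kf x (\<lambda>_. 1) z + P z x = 1"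
proof -
  assume z: "z \<in> S" and x: "x \<in> S"
  show ?thesis
  proof (cases "x \<in> Succ z")
    case True
    have "(\<Sum>y\<in>Succ z. P z y) = P z x + (\<Sum>y\<in>Succ z - {x}. P z y)"
      using True fin_Succ[OF z] by (simp add: sum.remove)
    then show ?thesis using P_row[OF z] by (simp add: Kf_def)
  next
    case False
    then show ?thesis using P_row[OF z] P_zero[OF z x] by (simp add: Kf_def)
  qed
qed

lemma Kf_le1: "z \<in> S \<Longrightarrow> x \<in> S \<Longrightarrow> (\<And>y. y \<in> S - {x} \<Longrightarrow> h y \<le> 1) \<Longrightarrow> Kf x h z \<le> 1"
proof -
  assume z: "z \<in> S" and x: "x \<in> S" and h: "\<And>y. y \<in> S - {x} \<Longrightarrow> h y \<le> 1"
  have "Kf x h z \<le> Kf x (\<lambda>_. 1) z" by (rule Kf_mono[OF z]) (use h in auto)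
  also have "\<dots> \<le> 1" using Kf_one_plus[OF z x] P_nonneg[OF z x] by linarith
  finally show ?thesis .
qed

fun Ef :: "'s \<Rightarrow> nat \<Rightarrow> 's \<Rightarrow> real" where
  "Ef x 0 = (\<lambda>z. 1)" | "Ef x (Suc n) = Kf x (Ef x n)"
fun Rf :: "'s \<Rightarrow> nat \<Rightarrow> 's \<Rightarrow> real" where
  "Rf x 0 = (\<lambda>z. P z x)" | "Rf x (Suc n) = Kf x (Rf x n)"
fun Uf :: "'s \<Rightarrow> nat \<Rightarrow> 's \<Rightarrow> real" where
  "Uf x 0 = (\<lambda>z. 1 / qo z)" | "Uf x (Suc n) = Kf x (Uf x n)"

lemma Ef_bounds: "x \<in> S \<Longrightarrow> z \<in> S \<Longrightarrow> 0 \<le> Ef x n z \<and> Ef x n z \<le> 1"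
proof (induction n arbitrary: z)
  case 0 then show ?case by simp
next
  case (Suc n) then show ?case by (auto intro: Kf_nonneg Kf_le1)
qed

lemma Rf_nonneg: "x \<in> S \<Longrightarrow> z \<in> S \<Longrightarrow> 0 \<le> Rf x n z"
proof (induction n arbitrary: z)
  case 0 then show ?case by (simp add: P_nonneg)
next
  case (Suc n) then show ?case by (auto intro: Kf_nonneg)
qed

lemma Uf_nonneg: "z \<in> S \<Longrightarrow> 0 \<le> Uf x n z"
proof (induction n arbitrary: z)
  case 0 then show ?case using out_pos[of z] by simp
next
  case (Suc n) then show ?case by (auto intro: Kf_nonneg)
qed

lemma ER: "x \<in> S \<Longrightarrow> z \<in> S \<Longrightarrow> Ef x n z = Ef x (Suc n) z + Rf x n z"
proof (induction n arbitrary: z)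
  case 0 then show ?case using Kf_one_plus by simp
next
  case (Suc n)
  have "Ef x (Suc n) z = Kf x (\<lambda>y. Ef x (Suc n) y + Rf x n y) z"
    by (simp, rule Kf_cong) (use Suc in auto)
  also have "\<dots> = Ef x (Suc (Suc n)) z + Rf x (Suc n) z" by (simp add: Kf_add)
  finally show ?case .
qed

lemma R_partial: "x \<in> S \<Longrightarrow> z \<in> S \<Longrightarrow> (\<Sum>k<N. Rf x k z) = 1 - Ef x N z"
proof (induction N)
  case 0 then show ?case by simp
next
  case (Suc N) then show ?case using ER[of x z N] by simp
qed

lemma R_partial_le1: "x \<in> S \<Longrightarrow> z \<in> S \<Longrightarrow> (\<Sum>k<N. Rf x k z) \<le> 1"
  using R_partial Ef_bounds by fastforce

end



context jumpchain begin

lemma KEY: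
  assumes x: "x \<in> S" and hnn: "\<And>y. y \<in> S - {x} \<Longrightarrow> 0 \<le> h y"
    and hs: "((\<lambda>y. nu y * h y) has_sum Lh) (S - {x})"
  shows "((\<lambda>z. nu z * Kf x h z) has_sum (Lh - nu x * Kf x h x)) (S - {x})"
proof -
  define T where "T = S - {x}"
  have bal_T: "((\<lambda>z. \<pi> z * q z y) has_sum (nu y - \<pi> x * q x y)) T" if y: "y \<in> T" for y
  proof -
    have yS: "y \<in> S" using y by (simp add: T_def)
    have b: "((\<lambda>z. \<pi> z * q z y) has_sum nu y) (S - {y})"
      using balance[OF yS] by (simp add: nu_def)
    have "((\<lambda>z. \<pi> z * q z y) has_sum nu y) S"
      by (rule has_sum_add_zero_point[where x = y, OF b]) (simp add: q_diag[OF yS])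
    from has_sum_remove_point[OF this x] show ?thesis by (simp add: T_def)
  qed
  have inner: "((\<lambda>z. \<pi> z * q z y * h y) has_sum (h y * (nu y - \<pi> x * q x y))) T" if y: "y \<in> T" for y
    using has_sum_cmult_left[OF bal_T[OF y], of "h y"] by (simp add: mult.commute)
  have qx: "((\<lambda>y. h y * (\<pi> x * q x y)) has_sum (nu x * Kf x h x)) T"
  proof (rule has_sum_finite_neutralI[of "Succ x - {x}"])
    show "finite (Succ x - {x})" using fin_Succ[OF x] by simp
    show "Succ x - {x} \<subseteq> T" using Succ_sub[OF x] by (auto simp: T_def)
    show "h y * (\<pi> x * q x y) = 0" if "y \<in> T - (Succ x - {x})" for y
      using that by (auto simp: T_def Succ_def)
    show "nu x * Kf x h x = (\<Sum>y\<in>Succ x - {x}. h y * (\<pi> x * q x y))"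
      unfolding Kf_def sum_distrib_left
      by (rule sum.cong) (use nu_P[OF x] in \<open>auto simp: algebra_simps\<close>)
  qed
  have hsT: "((\<lambda>y. nu y * h y) has_sum Lh) T" using hs by (simp add: T_def)
  have outer: "((\<lambda>y. h y * (nu y - \<pi> x * q x y)) has_sum (Lh - nu x * Kf x h x)) T"
    using has_sum_diff'[OF hsT qx] by (simp add: algebra_simps)
  have nnF: "0 \<le> \<pi> z * q z y * h y" if "y \<in> T" "z \<in> T" for y z
    using that pi_nonneg q_nonneg hnn by (auto simp: T_def)
  have summ: "(\<lambda>(y, z). \<pi> z * q z y * h y) summable_on Sigma T (\<lambda>_. T)"
    by (rule summable_on_SigmaI[where g = "\<lambda>y. h y * (nu y - \<pi> x * q x y)"])
       (use inner has_sum_imp_summable[OF outer] nnF in auto)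
  have HS: "((\<lambda>(y, z). \<pi> z * q z y * h y) has_sum (Lh - nu x * Kf x h x)) (Sigma T (\<lambda>_. T))"
    by (rule has_sum_SigmaI[OF _ outer summ]) (use inner in auto)
  then have HS1: "((\<lambda>(y, z). \<pi> z * q z y * h y) has_sum (Lh - nu x * Kf x h x)) (T \<times> T)"
    by simp
  have HS2: "((\<lambda>(z, y). \<pi> z * q z y * h y) has_sum (Lh - nu x * Kf x h x)) (T \<times> T)"
    using has_sum_swap[THEN iffD1, OF HS1] by (simp add: split_beta)
  have inner2: "((\<lambda>y. \<pi> z * q z y * h y) has_sum (nu z * Kf x h z)) T" if z: "z \<in> T" for z
  proof (rule has_sum_finite_neutralI[of "Succ z - {x}"])
    have zS: "z \<in> S" using z by (simp add: T_def)
    show "finite (Succ z - {x})" using fin_Succ[OF zS] by simp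
    show "Succ z - {x} \<subseteq> T" using Succ_sub[OF zS] by (auto simp: T_def)
    show "\<pi> z * q z y * h y = 0" if "y \<in> T - (Succ z - {x})" for y
      using that by (auto simp: T_def Succ_def)
    show "nu z * Kf x h z = (\<Sum>y\<in>Succ z - {x}. \<pi> z * q z y * h y)"
      unfolding Kf_def sum_distrib_left
      by (rule sum.cong) (use nu_P[OF zS] in \<open>auto simp: algebra_simps\<close>)
  qed
  have "((\<lambda>z. nu z * Kf x h z) has_sum (Lh - nu x * Kf x h x)) T"
    by (rule has_sum_Sigma'[OF HS2]) (use inner2 in auto)
  then show ?thesis by (simp add: T_def)
qed

end


context jumpchain begin
definition L0 where "L0 x = infsum nu (S - {x})"
definition L0u where "L0u x = infsum \<pi> (S - {x})"

lemma nu_nonneg: "z \<in> S \<Longrightarrow> 0 \<le> nu z"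
  unfolding nu_def by (intro mult_nonneg_nonneg pi_nonneg less_imp_le[OF out_pos])

lemma LE: "x \<in> S \<Longrightarrow>
  ((\<lambda>z. nu z * Ef x N z) has_sum (L0 x - nu x * (\<Sum>k\<in>{1..N}. Ef x k x))) (S - {x})"
proof (induction N)
  case 0
  have "nu summable_on S" using nu_summ by (simp add: nu_def[abs_def])
  then have "nu summable_on (S - {x})"
    by (rule summable_on_subset_banach) auto
  then show ?case by (simp add: L0_def)
next
  case (Suc N)
  have "((\<lambda>z. nu z * Kf x (Ef x N) z) has_sum
     ((L0 x - nu x * (\<Sum>k\<in>{1..N}. Ef x k x)) - nu x * Kf x (Ef x N) x)) (S - {x})"
    by (rule KEY[OF Suc.prems _ Suc.IH[OF Suc.prems]]) (simp add: Ef_bounds[OF Suc.prems])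
  then show ?case by (simp add: sum.cl_ivl_Suc algebra_simps)
qed

end


context jumpchain begin
lemma LU: "x \<in> S \<Longrightarrow>
  ((\<lambda>z. nu z * Uf x N z) has_sum (L0u x - nu x * (\<Sum>k\<in>{1..N}. Uf x k x))) (S - {x})"
proof (induction N)
  case 0
  have "\<pi> summable_on (S - {x})"
    using pi_summ by (rule summable_on_subset_banach) auto
  then have "(\<pi> has_sum L0u x) (S - {x})" by (simp add: L0u_def)
  moreover have eq: "nu z * Uf x 0 z = \<pi> z" if "z \<in> S - {x}" for z
  proof -
    have "qo z > 0" using that by (auto intro: out_pos)
    then show ?thesis by (simp add: nu_def)
  qed
  have "((\<lambda>z. nu z * Uf x 0 z) has_sum L0u x) (S - {x}) \<longleftrightarrow> (\<pi> has_sum L0u x) (S - {x})"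
    by (rule has_sum_cong) (rule eq)
  ultimately show ?case by simp
next
  case (Suc N)
  have "((\<lambda>z. nu z * Kf x (Uf x N) z) has_sum
     ((L0u x - nu x * (\<Sum>k\<in>{1..N}. Uf x k x)) - nu x * Kf x (Uf x N) x)) (S - {x})"
    by (rule KEY[OF Suc.prems _ Suc.IH[OF Suc.prems]]) (simp add: Uf_nonneg)
  then show ?case by (simp add: sum.cl_ivl_Suc algebra_simps)
qed

lemma LE_bound: "x \<in> S \<Longrightarrow> nu x * (\<Sum>k\<in>{1..N}. Ef x k x) \<le> L0 x"
proof -
  assume x: "x \<in> S"
  have "0 \<le> L0 x - nu x * (\<Sum>k\<in>{1..N}. Ef x k x)"
    by (rule has_sum_nonneg[OF LE[OF x]]) (use nu_nonneg Ef_bounds x in auto)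
  then show ?thesis by simp
qed

lemma LU_bound: "x \<in> S \<Longrightarrow> nu x * (\<Sum>k\<in>{1..N}. Uf x k x) \<le> L0u x"
proof -
  assume x: "x \<in> S"
  have "0 \<le> L0u x - nu x * (\<Sum>k\<in>{1..N}. Uf x k x)"
    by (rule has_sum_nonneg[OF LU[OF x]]) (use nu_nonneg Uf_nonneg x in auto)
  then show ?thesis by simp
qed

end


context jumpchain begin
lemma Ef_dec: "x \<in> S \<Longrightarrow> decseq (\<lambda>n. Ef x n x)"
proof (rule decseq_SucI)
  fix n assume x: "x \<in> S"
  show "Ef x (Suc n) x \<le> Ef x n x" using ER[OF x x, of n] Rf_nonneg[OF x x, of n] by linarith
qed

lemma Ef_lim:
  assumes x: "x \<in> S" and px: "0 < \<pi> x"
  shows "(\<lambda>N. Ef x N x) \<longlonglongrightarrow> 0"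
proof -
  have nux: "0 < nu x" using px out_pos[OF x] by (simp add: nu_def)
  have up: "Ef x N x \<le> (L0 x / nu x) / real N" if "N \<ge> 1" for N
  proof -
    have "real N * Ef x N x = (\<Sum>k\<in>{1..N}. Ef x N x)" by simp
    also have "\<dots> \<le> (\<Sum>k\<in>{1..N}. Ef x k x)"
      by (rule sum_mono) (use decseqD[OF Ef_dec[OF x]] in auto)
    also have "\<dots> \<le> L0 x / nu x" using LE_bound[OF x, of N] nux by (simp add: field_simps)
    finally have "real N * Ef x N x \<le> L0 x / nu x" .
    moreover have "0 < real N" using that by simp
    ultimately show ?thesis using nux by (simp add: field_simps)
  qed
  show ?thesis
  proof (rule real_tendsto_sandwich[where f = "\<lambda>_. 0" and h = "\<lambda>N. (L0 x / nu x) / real N"])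
    show "\<forall>\<^sub>F n in sequentially. 0 \<le> Ef x n x" using Ef_bounds x by auto
    show "\<forall>\<^sub>F n in sequentially. Ef x n x \<le> L0 x / nu x / real n"
      using eventually_ge_at_top[of 1] by (rule eventually_mono) (rule up)
    show "(\<lambda>n. 0) \<longlonglongrightarrow> (0::real)" by simp
    show "(\<lambda>n. L0 x / nu x / real n) \<longlonglongrightarrow> 0" by (rule lim_const_over_n)
  qed
qed

lemma R_sums: "x \<in> S \<Longrightarrow> 0 < \<pi> x \<Longrightarrow> (\<lambda>n. Rf x n x) sums 1"
proof -
  assume x: "x \<in> S" and px: "0 < \<pi> x"
  have "(\<lambda>N. 1 - Ef x N x) \<longlonglongrightarrow> 1 - 0"
    by (intro tendsto_diff tendsto_const Ef_lim[OF x px])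
  then show ?thesis unfolding sums_def using R_partial[OF x x] by simp
qed

end


context jumpchain begin

fun Paths :: "'s \<Rightarrow> 's \<Rightarrow> nat \<Rightarrow> 's list set" where
  "Paths x z 0 = {[]}"
| "Paths x z (Suc n) = (\<Union>y\<in>Succ z - {x}. (\<lambda>r. y # r) ` Paths x y n)"

lemma Paths_fin: "z \<in> S \<Longrightarrow> finite (Paths x z n)"
proof (induction n arbitrary: z)
  case 0 show ?case by simp
next
  case (Suc n)
  have "finite (Succ z - {x})" using fin_Succ[OF Suc.prems] by simp
  moreover have "\<forall>y\<in>Succ z - {x}. finite (Paths x y n)"
    using Suc.IH Succ_diff_sub[OF Suc.prems] by blast
  ultimately show ?case by simp
qed

lemma Paths_sub: "z \<in> S \<Longrightarrow> ys \<in> Paths x z n \<Longrightarrow> length ys = n \<and> ys \<in> lists (S - {x})"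
proof (induction n arbitrary: z ys)
  case 0 then show ?case by simp
next
  case (Suc n)
  then obtain y r where y: "y \<in> Succ z - {x}" and r: "r \<in> Paths x y n" and ys: "ys = y # r" by auto
  have yS: "y \<in> S - {x}" using Succ_diff_sub[OF Suc.prems(1) y] .
  then have "length r = n \<and> r \<in> lists (S - {x})" using Suc.IH r by auto
  then show ?case using ys yS by simp
qed

lemma pw_nonneg: "set l \<subseteq> S \<Longrightarrow> 0 \<le> path_weight P l"
  by (induction l rule: induct_list012) (auto intro!: mult_nonneg_nonneg P_nonneg)

lemma pw_zero: "z \<in> S \<Longrightarrow> ys \<in> lists (S - {x}) \<Longrightarrow> ys \<notin> Paths x z (length ys)
   \<Longrightarrow> path_weight P (z # ys @ [x]) = 0"
proof (induction ys arbitrary: z)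
  case Nil then show ?case by simp
next
  case (Cons y r)
  have yS: "y \<in> S - {x}" using Cons.prems by simp
  show ?case
  proof (cases "y \<in> Succ z")
    case True
    then have "r \<notin> Paths x y (length r)" using Cons.prems yS by auto
    then have "path_weight P (y # r @ [x]) = 0" using Cons.IH yS Cons.prems by auto
    then show ?thesis by simp
  next
    case False
    then have "P z y = 0" using P_zero Cons.prems yS by auto
    then show ?thesis by simp
  qed
qed

lemma sum_Paths_Suc:
  assumes z: "z \<in> S"
  shows "(\<Sum>ys\<in>Paths x z (Suc n). g ys) = (\<Sum>y\<in>Succ z - {x}. \<Sum>r\<in>Paths x y n. g (y # r))"
proof -
  have fin: "finite (Succ z - {x})" using fin_Succ[OF z] by simp
  have "(\<Sum>ys\<in>Paths x z (Suc n). g ys) = (\<Sum>y\<in>Succ z - {x}. \<Sum>ys\<in>(\<lambda>r. y # r) ` Paths x y n. g ys)"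
  proof -
    have fA: "\<forall>y\<in>Succ z - {x}. finite ((\<lambda>r. y # r) ` Paths x y n)"
      using Succ_diff_sub[OF z] Paths_fin by blast
    have dA: "\<forall>i\<in>Succ z - {x}. \<forall>j\<in>Succ z - {x}. i \<noteq> j \<longrightarrow>
         (\<lambda>r. i # r) ` Paths x i n \<inter> (\<lambda>r. j # r) ` Paths x j n = {}" by auto
    show ?thesis unfolding Paths.simps by (rule sum.UNION_disjoint[OF fin fA dA])
  qed
  also have "\<dots> = (\<Sum>y\<in>Succ z - {x}. \<Sum>r\<in>Paths x y n. g (y # r))"
    by (rule sum.cong[OF refl], subst sum.reindex) (auto simp: inj_on_def)
  finally show ?thesis .
qed

lemma R_paths: "z \<in> S \<Longrightarrow> (\<Sum>ys\<in>Paths x z n. path_weight P (z # ys @ [x])) = Rf x n z"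
proof (induction n arbitrary: z)
  case 0 then show ?case by simp
next
  case (Suc n)
  have "(\<Sum>ys\<in>Paths x z (Suc n). path_weight P (z # ys @ [x]))
      = (\<Sum>y\<in>Succ z - {x}. \<Sum>r\<in>Paths x y n. P z y * path_weight P (y # r @ [x]))"
    by (subst sum_Paths_Suc[OF Suc.prems]) simp
  also have "\<dots> = Kf x (Rf x n) z"
    unfolding Kf_def
  proof (rule sum.cong[OF refl])
    fix y assume "y \<in> Succ z - {x}"
    then have "y \<in> S" using Succ_diff_sub[OF Suc.prems] by auto
    then show "(\<Sum>r\<in>Paths x y n. P z y * path_weight P (y # r @ [x])) = P z y * Rf x n y"
      by (simp add: sum_distrib_left[symmetric] Suc.IH)
  qed
  finally show ?case by simp
qed

definition tau where "tau l = sum_list (map (\<lambda>z. 1 / qo z) l)"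
definition Tf where "Tf x n z = (\<Sum>ys\<in>Paths x z n. path_weight P (z # ys @ [x]) * tau (z # ys))"

lemma tau_nonneg: "set l \<subseteq> S \<Longrightarrow> 0 \<le> tau l"
  unfolding tau_def
proof (rule sum_list_nonneg)
  fix v assume l: "set l \<subseteq> S" and v: "v \<in> set (map (\<lambda>z. 1 / qo z) l)"
  then obtain z where z: "z \<in> set l" "v = 1 / qo z" by auto
  then have "0 < qo z" using l out_pos by auto
  then show "0 \<le> v" using z by simp
qed

lemma Tf_nonneg: "x \<in> S \<Longrightarrow> z \<in> S \<Longrightarrow> 0 \<le> Tf x n z"
  unfolding Tf_def
proof (rule sum_nonneg)
  fix ys assume x: "x \<in> S" and z: "z \<in> S" and ys: "ys \<in> Paths x z n"
  have "set ys \<subseteq> S" using Paths_sub[OF z ys] by auto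
  then show "0 \<le> path_weight P (z # ys @ [x]) * tau (z # ys)"
    using x z by (intro mult_nonneg_nonneg pw_nonneg tau_nonneg) auto
qed

lemma Tf_0: "Tf x 0 z = Rf x 0 z / qo z"
  by (simp add: Tf_def tau_def)

lemma Tf_Suc: "z \<in> S \<Longrightarrow> Tf x (Suc n) z = Rf x (Suc n) z / qo z + Kf x (Tf x n) z"
proof -
  assume z: "z \<in> S"
  have "Tf x (Suc n) z = (\<Sum>y\<in>Succ z - {x}. \<Sum>r\<in>Paths x y n.
          P z y * path_weight P (y # r @ [x]) * (1 / qo z + tau (y # r)))"
    unfolding Tf_def by (subst sum_Paths_Suc[OF z]) (simp add: tau_def)
  also have "\<dots> = (\<Sum>y\<in>Succ z - {x}. (P z y * (\<Sum>r\<in>Paths x y n. path_weight P (y # r @ [x]))) / qo z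
          + P z y * Tf x n y)"
  proof (rule sum.cong[OF refl])
    fix y assume "y \<in> Succ z - {x}"
    show "(\<Sum>r\<in>Paths x y n. P z y * path_weight P (y # r @ [x]) * (1 / qo z + tau (y # r)))
        = (P z y * (\<Sum>r\<in>Paths x y n. path_weight P (y # r @ [x]))) / qo z + P z y * Tf x n y"
      unfolding Tf_def sum_distrib_left sum_divide_distrib sum.distrib[symmetric]
      by (rule sum.cong[OF refl]) (simp add: algebra_simps)
  qed
  also have "\<dots> = (\<Sum>y\<in>Succ z - {x}. P z y * Rf x n y) / qo z + Kf x (Tf x n) z"
    unfolding Kf_def sum.distrib sum_divide_distrib
  proof (rule arg_cong2[where f = "(+)"])
    show "(\<Sum>y\<in>Succ z - {x}. P z y * (\<Sum>r\<in>Paths x y n. path_weight P (y # r @ [x])) / qo z)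
        = (\<Sum>y\<in>Succ z - {x}. P z y * Rf x n y / qo z)"
    proof (rule sum.cong[OF refl])
      fix y assume "y \<in> Succ z - {x}"
      then have "y \<in> S" using Succ_diff_sub[OF z] by auto
      then show "P z y * (\<Sum>r\<in>Paths x y n. path_weight P (y # r @ [x])) / qo z = P z y * Rf x n y / qo z"
        by (simp add: R_paths)
    qed
  qed simp
  also have "\<dots> = Rf x (Suc n) z / qo z + Kf x (Tf x n) z"
    by (simp add: Kf_def)
  finally show ?thesis .
qed

lemma T_partial: "x \<in> S \<Longrightarrow> z \<in> S \<Longrightarrow> (\<Sum>n<N. Tf x n z) \<le> (\<Sum>k<N. Uf x k z)"
proof (induction N arbitrary: z)
  case 0 show ?case by simp
next
  case (Suc N)
  have qz: "0 < qo z" using out_pos[OF Suc.prems(2)] .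
  have "(\<Sum>n<Suc N. Tf x n z) = Tf x 0 z + (\<Sum>n<N. Tf x (Suc n) z)"
    by (rule sum.lessThan_Suc_shift)
  also have "\<dots> = (Rf x 0 z + (\<Sum>n<N. Rf x (Suc n) z)) / qo z + Kf x (\<lambda>y. \<Sum>n<N. Tf x n y) z"
    using Suc.prems by (simp add: Tf_0 Tf_Suc sum.distrib Kf_sum add_divide_distrib sum_divide_distrib)
  also have "\<dots> = (\<Sum>n<Suc N. Rf x n z) / qo z + Kf x (\<lambda>y. \<Sum>n<N. Tf x n y) z"
    unfolding sum.lessThan_Suc_shift[of "\<lambda>n. Rf x n z"] by simp
  also have "\<dots> \<le> 1 / qo z + Kf x (\<lambda>y. \<Sum>k<N. Uf x k y) z"
  proof (rule add_mono)
    show "(\<Sum>n<Suc N. Rf x n z) / qo z \<le> 1 / qo z"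
      by (rule divide_right_mono[OF R_partial_le1[OF Suc.prems]]) (use qz in simp)
    show "Kf x (\<lambda>y. \<Sum>n<N. Tf x n y) z \<le> Kf x (\<lambda>y. \<Sum>k<N. Uf x k y) z"
      by (rule Kf_mono[OF Suc.prems(2)]) (use Suc.IH Suc.prems in auto)
  qed
  also have "\<dots> = (\<Sum>k<Suc N. Uf x k z)"
    unfolding sum.lessThan_Suc_shift[of "\<lambda>k. Uf x k z"] by (simp add: Kf_sum)
  finally show ?case .
qed

lemma pos_rec:
  assumes x: "x \<in> S" and px: "0 < \<pi> x"
  shows "positive_recurrent S q x"
  unfolding positive_recurrent_def
proof (intro conjI)
  show "0 < qo x" by (rule out_pos[OF x])
  have nn1: "0 \<le> path_weight P (x # ys @ [x])" if "ys \<in> lists (S - {x})" for ys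
    using that x by (intro pw_nonneg) auto
  show "((\<lambda>ys. path_weight P (x # ys @ [x])) has_sum 1) (lists (S - {x}))"
  proof (rule has_sum_by_length[where Q = "Paths x x"])
    show "finite (Paths x x n)" for n by (rule Paths_fin[OF x])
    show "Paths x x n \<subseteq> {ys \<in> lists (S - {x}). length ys = n}" for n
      using Paths_sub[OF x] by auto
    show "path_weight P (x # ys @ [x]) = 0" if "ys \<in> lists (S - {x})" "ys \<notin> Paths x x (length ys)" for ys
      using pw_zero[OF x that] .
    show "0 \<le> path_weight P (x # ys @ [x])" if "ys \<in> lists (S - {x})" for ys using nn1[OF that] .
    show "(\<lambda>n. \<Sum>ys\<in>Paths x x n. path_weight P (x # ys @ [x])) sums 1"
      using R_sums[OF x px] by (simp add: R_paths[OF x])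
  qed
  define g where "g ys = path_weight P (x # ys @ [x]) * sum_list (map (\<lambda>z. 1 / qo z) (x # ys))" for ys
  have nux: "0 < nu x" using px out_pos[OF x] by (simp add: nu_def)
  have bnd: "(\<Sum>n<N. Tf x n x) \<le> Uf x 0 x + L0u x / nu x" for N
  proof -
    have "(\<Sum>n<N. Tf x n x) \<le> (\<Sum>k<N. Uf x k x)" by (rule T_partial[OF x x])
    also have "\<dots> \<le> (\<Sum>k<Suc N. Uf x k x)" by (simp add: Uf_nonneg[OF x])
    also have "\<dots> = Uf x 0 x + (\<Sum>k\<in>{1..N}. Uf x k x)"
      unfolding sum.lessThan_Suc_shift[of "\<lambda>k. Uf x k x"] by (simp add: sum.atLeast1_atMost_eq)
    also have "\<dots> \<le> Uf x 0 x + L0u x / nu x"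
      using LU_bound[OF x, of N] nux by (simp add: field_simps)
    finally show ?thesis .
  qed
  have smT: "summable (\<lambda>n. Tf x n x)"
    by (rule summableI_nonneg_bounded[OF Tf_nonneg[OF x x] bnd])
  have "(g has_sum (suminf (\<lambda>n. Tf x n x))) (lists (S - {x}))"
  proof (rule has_sum_by_length[where Q = "Paths x x"])
    show "finite (Paths x x n)" for n by (rule Paths_fin[OF x])
    show "Paths x x n \<subseteq> {ys \<in> lists (S - {x}). length ys = n}" for n
      using Paths_sub[OF x] by auto
    show "g ys = 0" if "ys \<in> lists (S - {x})" "ys \<notin> Paths x x (length ys)" for ys
      using pw_zero[OF x that] by (simp add: g_def)
    show "0 \<le> g ys" if "ys \<in> lists (S - {x})" for ys
      unfolding g_def using nn1[OF that] tau_nonneg[of "x # ys"] that x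
      by (intro mult_nonneg_nonneg) (auto simp: tau_def)
    show "(\<lambda>n. sum g (Paths x x n)) sums suminf (\<lambda>n. Tf x n x)"
      using smT by (simp add: Tf_def g_def tau_def summable_sums)
  qed
  then show "g summable_on lists (S - {x})" by (rule has_sum_imp_summable)
qed

end


locale jnet =
  fixes J :: nat and lam :: real and \<mu> :: "nat \<Rightarrow> nat \<Rightarrow> real" and r :: "nat \<Rightarrow> nat \<Rightarrow> real"
    and \<eta> :: "nat \<Rightarrow> real" and \<gamma> :: "nat \<Rightarrow> real" and ra :: "nat \<Rightarrow> nat \<Rightarrow> real"
  assumes J1: "1 \<le> J"
    and lam_pos: "0 < lam"
    and mu_pos: "\<forall>j\<in>{1..J}. \<forall>n\<ge>1. 0 < \<mu> j n"
    and r_stoch: "stochastic_on J r"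
    and r_irred: "irreducible_matrix J r"
    and eta_0: "\<eta> 0 = lam"
    and eta_traffic: "\<forall>j\<in>{0..J}. \<eta> j = (\<Sum>i\<in>{0..J}. \<eta> i * r i j)"
    and C_fin: "\<forall>j\<in>{1..J}. summable (\<lambda>n. \<Prod>k\<in>{1..n}. \<eta> j / \<mu> j k)"
    and gamma_nonneg: "\<forall>j\<in>{1..J}. 0 \<le> \<gamma> j"
    and ra_stoch: "stochastic_on J ra"
    and ra_inv: "invariant_measure J ra (\<lambda>j. alpha J \<gamma> j * \<eta> j)"
begin

abbreviation B where "B \<equiv> Bset J \<gamma>"
abbreviation W where "W \<equiv> Wset J \<gamma>"
abbreviation bt where "bt \<equiv> beta J \<gamma>"
abbreviation S where "S \<equiv> jstates J"

lemma r_nonneg: "i \<in> {0..J} \<Longrightarrow> j \<in> {0..J} \<Longrightarrow> 0 \<le> r i j"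
  using r_stoch by (auto simp: stochastic_on_def)
lemma ra_nonneg: "i \<in> {0..J} \<Longrightarrow> j \<in> {0..J} \<Longrightarrow> 0 \<le> ra i j"
  using ra_stoch by (auto simp: stochastic_on_def)
lemma r_row: "i \<in> {0..J} \<Longrightarrow> (\<Sum>j\<in>{0..J}. r i j) = 1"
  using r_stoch by (auto simp: stochastic_on_def)
lemma ra_row: "i \<in> {0..J} \<Longrightarrow> (\<Sum>j\<in>{0..J}. ra i j) = 1"
  using ra_stoch by (auto simp: stochastic_on_def)

lemma eta_pos: "j \<in> {0..J} \<Longrightarrow> 0 < \<eta> j"
proof -
  define N where "N = {0..J::nat}"
  have finN: "finite N" by (simp add: N_def)
  have tr: "\<eta> j = (\<Sum>i\<in>N. \<eta> i * r i j)" if "j \<in> N" for j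
    using eta_traffic that by (simp add: N_def)
  have rn: "0 \<le> r i j" if "i \<in> N" "j \<in> N" for i j using r_nonneg that by (simp add: N_def)
  have le: "\<bar>\<eta> j\<bar> \<le> (\<Sum>i\<in>N. \<bar>\<eta> i\<bar> * r i j)" if j: "j \<in> N" for j
  proof -
    have "\<bar>\<eta> j\<bar> = \<bar>\<Sum>i\<in>N. \<eta> i * r i j\<bar>" using tr[OF j] by simp
    also have "\<dots> \<le> (\<Sum>i\<in>N. \<bar>\<eta> i * r i j\<bar>)" by (rule sum_abs)
    also have "\<dots> = (\<Sum>i\<in>N. \<bar>\<eta> i\<bar> * r i j)"
      by (rule sum.cong) (use rn j in \<open>auto simp: abs_mult\<close>)
    finally show ?thesis .
  qed
  have tot: "(\<Sum>j\<in>N. (\<Sum>i\<in>N. \<bar>\<eta> i\<bar> * r i j) - \<bar>\<eta> j\<bar>) = 0"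
  proof -
    have "(\<Sum>j\<in>N. \<Sum>i\<in>N. \<bar>\<eta> i\<bar> * r i j) = (\<Sum>i\<in>N. \<bar>\<eta> i\<bar> * (\<Sum>j\<in>N. r i j))"
      by (subst sum.swap) (simp add: sum_distrib_left)
    also have "\<dots> = (\<Sum>i\<in>N. \<bar>\<eta> i\<bar>)" using r_row by (simp add: N_def)
    finally show ?thesis by (simp add: sum_subtractf)
  qed
  have eq: "\<bar>\<eta> j\<bar> = (\<Sum>i\<in>N. \<bar>\<eta> i\<bar> * r i j)" if j: "j \<in> N" for j
  proof -
    have nnd: "\<And>j. j \<in> N \<Longrightarrow> 0 \<le> (\<Sum>i\<in>N. \<bar>\<eta> i\<bar> * r i j) - \<bar>\<eta> j\<bar>"
      using le by simp
    have "\<forall>j\<in>N. (\<Sum>i\<in>N. \<bar>\<eta> i\<bar> * r i j) - \<bar>\<eta> j\<bar> = 0"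
      using sum_nonneg_eq_0_iff[OF finN nnd] tot by simp
    then show ?thesis using j by auto
  qed
  define R where "R = {(a, b). a \<in> {0..J} \<and> b \<in> {0..J} \<and> 0 < r a b}"
  have propg: "0 < \<eta> b" if "(a, b) \<in> R\<^sup>*" "0 < \<eta> a" "a \<in> N" for a b
    using that
  proof (induction rule: rtrancl_induct)
    case base then show ?case by simp
  next
    case (step b c)
    have bN: "b \<in> N" "c \<in> N" and rbc: "0 < r b c" using step.hyps(2) by (auto simp: R_def N_def)
    have pb: "0 < \<eta> b" using step.IH step.prems by simp
    show ?case
    proof (rule ccontr)
      assume "\<not> 0 < \<eta> c"
      then have "\<bar>\<eta> c\<bar> + \<eta> c = 0" by simp
      then have "(\<Sum>i\<in>N. \<bar>\<eta> i\<bar> * r i c + \<eta> i * r i c) = 0"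
        using eq[OF bN(2)] tr[OF bN(2)] by (simp add: sum.distrib)
      moreover have nnc: "\<And>i. i \<in> N \<Longrightarrow> 0 \<le> \<bar>\<eta> i\<bar> * r i c + \<eta> i * r i c"
      proof -
        fix i assume "i \<in> N"
        then have "0 \<le> r i c" using rn bN by auto
        then have "\<bar>\<eta> i * r i c\<bar> = \<bar>\<eta> i\<bar> * r i c" by (simp add: abs_mult)
        moreover have "- (\<eta> i * r i c) \<le> \<bar>\<eta> i * r i c\<bar>" by simp
        ultimately show "0 \<le> \<bar>\<eta> i\<bar> * r i c + \<eta> i * r i c" by linarith
      qed
      ultimately have "\<forall>i\<in>N. \<bar>\<eta> i\<bar> * r i c + \<eta> i * r i c = 0"
        using sum_nonneg_eq_0_iff[OF finN nnc] by simp
      then have "\<bar>\<eta> b\<bar> * r b c + \<eta> b * r b c = 0" using bN by blast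
      moreover have "0 < \<bar>\<eta> b\<bar> * r b c + \<eta> b * r b c" using pb rbc by simp
      ultimately show False by linarith
    qed
  qed
  assume j: "j \<in> {0..J}"
  have "(0, j) \<in> R\<^sup>*" using r_irred j by (simp add: irreducible_matrix_def R_def)
  moreover have "0 < \<eta> 0" using eta_0 lam_pos by simp
  ultimately show "0 < \<eta> j" using propg by (auto simp: N_def)
qed

end


context jnet begin
lemma gmax_ge: "j \<in> {1..J} \<Longrightarrow> \<gamma> j \<le> gmax J \<gamma>"
  unfolding gmax_def by (rule Max_ge) auto

lemma gmax_nonneg: "0 \<le> gmax J \<gamma>"
proof -
  have "1 \<in> {1..J}" using J1 by simp
  then have "\<gamma> 1 \<le> gmax J \<gamma>" "0 \<le> \<gamma> 1" using gmax_ge gamma_nonneg by auto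
  then show ?thesis by linarith
qed

lemma beta_pos: "0 < bt"
  unfolding beta_def by auto

lemma beta_alpha: "j \<in> {1..J} \<Longrightarrow> bt * alpha J \<gamma> j = \<gamma> j"
  unfolding beta_def alpha_def by auto

lemma alpha_nonneg: "j \<in> {0..J} \<Longrightarrow> 0 \<le> alpha J \<gamma> j"
proof -
  assume j: "j \<in> {0..J}"
  show ?thesis
  proof (cases "j = 0")
    case True then show ?thesis by (simp add: alpha_def)
  next
    case False
    then have "j \<in> {1..J}" using j by auto
    then have "bt * alpha J \<gamma> j \<ge> 0" using beta_alpha gamma_nonneg by auto
    then show ?thesis using beta_pos by (simp add: zero_le_mult_iff)
  qed
qed

lemma inv: "j \<in> {0..J} \<Longrightarrow> alpha J \<gamma> j * \<eta> j = (\<Sum>i\<in>{0..J}. alpha J \<gamma> i * \<eta> i * ra i j)"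
  using ra_inv unfolding invariant_measure_def by blast

definition G where "G j = \<gamma> j * \<eta> j"

lemma sum0J: "(\<Sum>i\<in>{0..J}. f i) = f 0 + (\<Sum>i\<in>{1..J}. f i)"
  by (simp add: sum.atLeast_Suc_atMost)

lemma traffic_j: "j \<in> {1..J} \<Longrightarrow> G j = bt * lam * ra 0 j + (\<Sum>i\<in>{1..J}. G i * ra i j)"
proof -
  assume j: "j \<in> {1..J}"
  have "alpha J \<gamma> j * \<eta> j = (\<Sum>i\<in>{0..J}. alpha J \<gamma> i * \<eta> i * ra i j)"
    by (rule inv) (use j in auto)
  then have "bt * (alpha J \<gamma> j * \<eta> j) = bt * (\<Sum>i\<in>{0..J}. alpha J \<gamma> i * \<eta> i * ra i j)" by simp
  also have "\<dots> = bt * lam * ra 0 j + (\<Sum>i\<in>{1..J}. bt * alpha J \<gamma> i * \<eta> i * ra i j)"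
    by (simp add: sum0J sum_distrib_left algebra_simps alpha_def eta_0)
  also have "\<dots> = bt * lam * ra 0 j + (\<Sum>i\<in>{1..J}. G i * ra i j)"
    by (simp add: G_def beta_alpha)
  finally show ?thesis using beta_alpha[OF j] by (simp add: G_def mult.assoc[symmetric])
qed

lemma traffic_0: "bt * lam = bt * lam * ra 0 0 + (\<Sum>i\<in>{1..J}. G i * ra i 0)"
proof -
  have "alpha J \<gamma> 0 * \<eta> 0 = (\<Sum>i\<in>{0..J}. alpha J \<gamma> i * \<eta> i * ra i 0)"
    by (rule inv) simp
  then have "bt * (alpha J \<gamma> 0 * \<eta> 0) = bt * (\<Sum>i\<in>{0..J}. alpha J \<gamma> i * \<eta> i * ra i 0)" by simp
  also have "\<dots> = bt * lam * ra 0 0 + (\<Sum>i\<in>{1..J}. bt * alpha J \<gamma> i * \<eta> i * ra i 0)"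
    by (simp add: sum0J sum_distrib_left algebra_simps alpha_def eta_0)
  also have "\<dots> = bt * lam * ra 0 0 + (\<Sum>i\<in>{1..J}. G i * ra i 0)"
    by (simp add: G_def beta_alpha)
  finally show ?thesis by (simp add: alpha_def eta_0)
qed

lemma B_sub: "B \<subseteq> {1..J}" by (auto simp: Bset_def)
lemma W_eq: "W = {j\<in>{1..J}. \<gamma> j \<noteq> 0}" by (auto simp: Wset_def Bset_def)
lemma BW_union: "B \<union> W = {1..J}" by (auto simp: Wset_def Bset_def)
lemma BW_disj: "B \<inter> W = {}" by (auto simp: Wset_def Bset_def)
lemma gamma_W: "j \<in> W \<Longrightarrow> 0 < \<gamma> j" using gamma_nonneg by (force simp: W_eq)
lemma gamma_B: "j \<in> B \<Longrightarrow> \<gamma> j = 0" by (simp add: Bset_def)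

lemma ra_into_B:
  assumes i: "i \<in> B"
  shows "ra 0 i = 0" and "\<And>j. j \<in> W \<Longrightarrow> ra j i = 0"
proof -
  have iJ: "i \<in> {1..J}" using i B_sub by auto
  have ai: "alpha J \<gamma> i = 0" using i by (simp add: alpha_def Bset_def)
  have e: "alpha J \<gamma> i * \<eta> i = (\<Sum>l\<in>{0..J}. alpha J \<gamma> l * \<eta> l * ra l i)"
    by (rule inv) (use iJ in auto)
  have "0 = (\<Sum>l\<in>{0..J}. alpha J \<gamma> l * \<eta> l * ra l i)"
    using e by (simp only: ai mult_zero_left)
  moreover have nn: "\<And>l. l \<in> {0..J} \<Longrightarrow> 0 \<le> alpha J \<gamma> l * \<eta> l * ra l i"
  proof -
    fix l assume l: "l \<in> {0..J}"
    show "0 \<le> alpha J \<gamma> l * \<eta> l * ra l i"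
      by (intro mult_nonneg_nonneg alpha_nonneg ra_nonneg less_imp_le[OF eta_pos]) (use l iJ in auto)
  qed
  ultimately have s0: "(\<Sum>l\<in>{0..J}. alpha J \<gamma> l * \<eta> l * ra l i) = 0" by simp
  have z: "\<forall>l\<in>{0..J}. alpha J \<gamma> l * \<eta> l * ra l i = 0"
    by (rule sum_nonneg_eq_0_iff[of "{0..J}" "\<lambda>l. alpha J \<gamma> l * \<eta> l * ra l i", THEN iffD1])
       (use nn s0 in auto)
  then have "alpha J \<gamma> 0 * \<eta> 0 * ra 0 i = 0" by auto
  then show "ra 0 i = 0" using eta_0 lam_pos by (simp add: alpha_def)
  fix j assume j: "j \<in> W"
  have jJ: "j \<in> {1..J}" using j by (simp add: W_eq)
  have "0 < bt * alpha J \<gamma> j" using beta_alpha[OF jJ] gamma_W[OF j] by simp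
  then have "0 < alpha J \<gamma> j" using beta_pos by (simp add: zero_less_mult_iff)
  moreover have "0 < \<eta> j" using eta_pos jJ by auto
  moreover have "alpha J \<gamma> j * \<eta> j * ra j i = 0" using z jJ by auto
  ultimately show "ra j i = 0" by simp
qed

end


lemma has_sum_single_gen:
  fixes g :: "'a \<Rightarrow> real"
  assumes "\<And>m. P m \<longleftrightarrow> (Q \<and> m = t)" "Q \<Longrightarrow> t \<in> A"
  shows "((\<lambda>m. if P m then g m else 0) has_sum (if Q then g t else 0)) A"
proof (cases Q)
  case True
  then have "((\<lambda>m. if m = t then g t else 0) has_sum g t) A" using assms(2) by (intro has_sum_single) auto
  moreover have "(\<lambda>m. if P m then g m else 0) = (\<lambda>m. if m = t then g t else 0)"
    using assms(1) True by auto
  ultimately show ?thesis using True by simp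
next
  case False
  then have "(\<lambda>m. if P m then g m else 0) = (\<lambda>m. 0)" using assms(1) by auto
  then show ?thesis using False by simp
qed

lemma jstates_upd: "n \<in> jstates J \<Longrightarrow> i \<in> {1..J} \<Longrightarrow> n(i := v) \<in> jstates J"
  by (auto simp: jstates_def)

lemma E1: fixes x m :: "nat \<Rightarrow> nat" shows "(x = m(i := m i + 1)) \<longleftrightarrow> (0 < x i \<and> m = x(i := x i - 1))"
proof
  assume h: "x = m(i := m i + 1)"
  then have "x i = m i + 1" by simp
  moreover have "\<forall>l. l \<noteq> i \<longrightarrow> x l = m l" using h by simp
  ultimately show "0 < x i \<and> m = x(i := x i - 1)" unfolding fun_eq_iff by auto
next
  assume h: "0 < x i \<and> m = x(i := x i - 1)"
  then show "x = m(i := m i + 1)" unfolding fun_eq_iff by auto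
qed

lemma E2: fixes x m :: "nat \<Rightarrow> nat" assumes "i \<noteq> j" shows "(0 < m j \<and> x = m(j := m j - 1, i := m i + 1))
   \<longleftrightarrow> (0 < x i \<and> m = x(i := x i - 1, j := x j + 1))"
proof
  note ij = assms assume h: "0 < m j \<and> x = m(j := m j - 1, i := m i + 1)"
  have "x i = m i + 1" "x j = m j - 1" "0 < m j" using ij h by auto
  moreover have "\<forall>l. l \<noteq> i \<longrightarrow> l \<noteq> j \<longrightarrow> x l = m l" using h by simp
  ultimately show "0 < x i \<and> m = x(i := x i - 1, j := x j + 1)" using ij unfolding fun_eq_iff by auto
next
  note ij = assms assume h: "0 < x i \<and> m = x(i := x i - 1, j := x j + 1)"
  have "m i = x i - 1" "m j = x j + 1" "0 < x i" using ij h by auto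
  moreover have "\<forall>l. l \<noteq> i \<longrightarrow> l \<noteq> j \<longrightarrow> x l = m l" using h by simp
  ultimately show "0 < m j \<and> x = m(j := m j - 1, i := m i + 1)" using ij unfolding fun_eq_iff by auto
qed

lemma E3: fixes x m :: "nat \<Rightarrow> nat" shows "(0 < m j \<and> x = m(j := m j - 1)) \<longleftrightarrow> (m = x(j := x j + 1))"
proof
  assume h: "0 < m j \<and> x = m(j := m j - 1)"
  then have "x j = m j - 1" "0 < m j" by auto
  moreover have "\<forall>l. l \<noteq> j \<longrightarrow> x l = m l" using h by simp
  ultimately show "m = x(j := x j + 1)" unfolding fun_eq_iff by auto
next
  assume h: "m = x(j := x j + 1)"
  then show "0 < m j \<and> x = m(j := m j - 1)" unfolding fun_eq_iff by auto
qed



lemma upd_ne: "b \<noteq> n i \<Longrightarrow> f(i := b) \<noteq> n"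
  by (metis fun_upd_same)
definition OUT where
  "OUT J a s rt n = (\<Sum>i\<in>{1..J}. a i)
     + (\<Sum>j\<in>{1..J}. \<Sum>i\<in>{1..J}. if i \<noteq> j \<and> 0 < n j then s j (n j) * rt j i else 0)
     + (\<Sum>j\<in>{1..J}. if 0 < n j then s j (n j) * rt j 0 else 0)"

definition IN where
  "IN J a s rt p x = (\<Sum>i\<in>{1..J}. if 0 < x i then p (x(i := x i - 1)) * a i else 0)
     + (\<Sum>j\<in>{1..J}. \<Sum>i\<in>{1..J}. if i \<noteq> j \<and> 0 < x i
          then p (x(i := x i - 1, j := x j + 1)) * (s j (x j + 1) * rt j i) else 0)
     + (\<Sum>j\<in>{1..J}. p (x(j := x j + 1)) * (s j (x j + 1) * rt j 0))"

lemma jq_out: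
  assumes n: "n \<in> jstates J"
  shows "(jackson_q J a s rt n has_sum OUT J a s rt n) (jstates J - {n})"
proof -
  let ?A = "jstates J - {n}"
  have h1: "((\<lambda>m. \<Sum>i\<in>{1..J}. if m = n(i := n i + 1) then a i else 0) has_sum (\<Sum>i\<in>{1..J}. a i)) ?A"
  proof (rule has_sum_finsum)
    fix i :: nat assume i: "i \<in> {1..J}"
    have "n(i := n i + 1) \<noteq> n" by (rule upd_ne) simp
    then have "n(i := n i + 1) \<in> ?A" using jstates_upd[OF n i] by auto
    then show "((\<lambda>m. if m = n(i := n i + 1) then a i else 0) has_sum a i) ?A"
      by (rule has_sum_single)
  qed simp
  have h2: "((\<lambda>m. \<Sum>j\<in>{1..J}. \<Sum>i\<in>{1..J}.
        if i \<noteq> j \<and> 0 < n j \<and> m = n(j := n j - 1, i := n i + 1) then s j (n j) * rt j i else 0)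
      has_sum (\<Sum>j\<in>{1..J}. \<Sum>i\<in>{1..J}. if i \<noteq> j \<and> 0 < n j then s j (n j) * rt j i else 0)) ?A"
  proof (rule has_sum_finsum, simp, rule has_sum_finsum, simp)
    fix j i :: nat assume j: "j \<in> {1..J}" and i: "i \<in> {1..J}"
    have ne: "n(j := n j - 1, i := n i + 1) \<noteq> n" by (rule upd_ne) simp
    show "((\<lambda>m. if i \<noteq> j \<and> 0 < n j \<and> m = n(j := n j - 1, i := n i + 1) then s j (n j) * rt j i else 0)
       has_sum (if i \<noteq> j \<and> 0 < n j then s j (n j) * rt j i else 0)) ?A"
      using ne has_sum_single_gen[where P = "\<lambda>m. i \<noteq> j \<and> 0 < n j \<and> m = n(j := n j - 1, i := n i + 1)"
          and Q = "i \<noteq> j \<and> 0 < n j" and t = "n(j := n j - 1, i := n i + 1)" and A = ?A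
          and g = "\<lambda>_. s j (n j) * rt j i"]
        jstates_upd[OF jstates_upd[OF n j] i]
      by auto
  qed
  have h3: "((\<lambda>m. \<Sum>j\<in>{1..J}. if 0 < n j \<and> m = n(j := n j - 1) then s j (n j) * rt j 0 else 0)
      has_sum (\<Sum>j\<in>{1..J}. if 0 < n j then s j (n j) * rt j 0 else 0)) ?A"
  proof (rule has_sum_finsum, simp)
    fix j :: nat assume j: "j \<in> {1..J}"
    have ne: "0 < n j \<Longrightarrow> n(j := n j - 1) \<noteq> n" by (rule upd_ne) simp
    show "((\<lambda>m. if 0 < n j \<and> m = n(j := n j - 1) then s j (n j) * rt j 0 else 0)
       has_sum (if 0 < n j then s j (n j) * rt j 0 else 0)) ?A"
      using ne has_sum_single_gen[where P = "\<lambda>m. 0 < n j \<and> m = n(j := n j - 1)"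
          and Q = "0 < n j" and t = "n(j := n j - 1)" and A = ?A
          and g = "\<lambda>_. s j (n j) * rt j 0"]
        jstates_upd[OF n j]
      by auto
  qed
  have "jackson_q J a s rt n = (\<lambda>m. (\<Sum>i\<in>{1..J}. if m = n(i := n i + 1) then a i else 0)
     + (\<Sum>j\<in>{1..J}. \<Sum>i\<in>{1..J}.
        if i \<noteq> j \<and> 0 < n j \<and> m = n(j := n j - 1, i := n i + 1) then s j (n j) * rt j i else 0)
     + (\<Sum>j\<in>{1..J}. if 0 < n j \<and> m = n(j := n j - 1) then s j (n j) * rt j 0 else 0))"
    by (simp add: jackson_q_def[abs_def])
  then show ?thesis unfolding OUT_def using has_sum_add[OF has_sum_add[OF h1 h2] h3] by simp
qed



lemma mult_if0: "(p::real) * (if c then v else 0) = (if c then p * v else 0)" by simp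

lemma jq_in:
  assumes x: "x \<in> jstates J"
  shows "((\<lambda>m. p m * jackson_q J a s rt m x) has_sum IN J a s rt p x) (jstates J - {x})"
proof -
  let ?A = "jstates J - {x}"
  have h1: "((\<lambda>m. \<Sum>i\<in>{1..J}. if x = m(i := m i + 1) then p m * a i else 0)
     has_sum (\<Sum>i\<in>{1..J}. if 0 < x i then p (x(i := x i - 1)) * a i else 0)) ?A"
  proof (rule has_sum_finsum, simp)
    fix i :: nat assume i: "i \<in> {1..J}"
    have ne: "0 < x i \<Longrightarrow> x(i := x i - 1) \<noteq> x" by (rule upd_ne) simp
    show "((\<lambda>m. if x = m(i := m i + 1) then p m * a i else 0)
       has_sum (if 0 < x i then p (x(i := x i - 1)) * a i else 0)) ?A"
      by (rule has_sum_single_gen[where g = "\<lambda>m. p m * a i"])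
         (use E1 ne jstates_upd[OF x i] in auto)
  qed
  have h2: "((\<lambda>m. \<Sum>j\<in>{1..J}. \<Sum>i\<in>{1..J}.
        if i \<noteq> j \<and> 0 < m j \<and> x = m(j := m j - 1, i := m i + 1) then p m * (s j (m j) * rt j i) else 0)
      has_sum (\<Sum>j\<in>{1..J}. \<Sum>i\<in>{1..J}. if i \<noteq> j \<and> 0 < x i
          then p (x(i := x i - 1, j := x j + 1)) * (s j (x j + 1) * rt j i) else 0)) ?A"
  proof (rule has_sum_finsum, simp, rule has_sum_finsum, simp)
    fix j i :: nat assume j: "j \<in> {1..J}" and i: "i \<in> {1..J}"
    have ne: "x(i := x i - 1, j := x j + 1) \<noteq> x" by (rule upd_ne) simp
    have eqv: "(i \<noteq> j \<and> 0 < m j \<and> x = m(j := m j - 1, i := m i + 1)) \<longleftrightarrow>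
        ((i \<noteq> j \<and> 0 < x i) \<and> m = x(i := x i - 1, j := x j + 1))" for m
      using E2[of i j m x] by auto
    have "((\<lambda>m. if i \<noteq> j \<and> 0 < m j \<and> x = m(j := m j - 1, i := m i + 1) then p m * (s j (m j) * rt j i) else 0)
       has_sum (if i \<noteq> j \<and> 0 < x i then p (x(i := x i - 1, j := x j + 1)) *
         (s j ((x(i := x i - 1, j := x j + 1)) j) * rt j i) else 0)) ?A"
      by (rule has_sum_single_gen[where g = "\<lambda>m. p m * (s j (m j) * rt j i)", OF eqv])
         (use ne jstates_upd[OF jstates_upd[OF x i] j] in auto)
    then show "((\<lambda>m. if i \<noteq> j \<and> 0 < m j \<and> x = m(j := m j - 1, i := m i + 1) then p m * (s j (m j) * rt j i) else 0)
       has_sum (if i \<noteq> j \<and> 0 < x i then p (x(i := x i - 1, j := x j + 1)) * (s j (x j + 1) * rt j i) else 0)) ?A"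
      by (simp only: fun_upd_same)
  qed
  have h3: "((\<lambda>m. \<Sum>j\<in>{1..J}. if 0 < m j \<and> x = m(j := m j - 1) then p m * (s j (m j) * rt j 0) else 0)
      has_sum (\<Sum>j\<in>{1..J}. p (x(j := x j + 1)) * (s j (x j + 1) * rt j 0))) ?A"
  proof (rule has_sum_finsum, simp)
    fix j :: nat assume j: "j \<in> {1..J}"
    have ne: "x(j := x j + 1) \<noteq> x" by (rule upd_ne) simp
    have eqv: "(0 < m j \<and> x = m(j := m j - 1)) \<longleftrightarrow> (True \<and> m = x(j := x j + 1))" for m
      using E3[of m j x] by simp
    have "((\<lambda>m. if 0 < m j \<and> x = m(j := m j - 1) then p m * (s j (m j) * rt j 0) else 0)
       has_sum (if True then p (x(j := x j + 1)) * (s j ((x(j := x j + 1)) j) * rt j 0) else 0)) ?A"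
      by (rule has_sum_single_gen[where g = "\<lambda>m. p m * (s j (m j) * rt j 0)", OF eqv])
         (use ne jstates_upd[OF x j] in auto)
    then show "((\<lambda>m. if 0 < m j \<and> x = m(j := m j - 1) then p m * (s j (m j) * rt j 0) else 0)
       has_sum (p (x(j := x j + 1)) * (s j (x j + 1) * rt j 0))) ?A"
      by (simp only: fun_upd_same if_True)
  qed
  have "(\<lambda>m. p m * jackson_q J a s rt m x) = (\<lambda>m. (\<Sum>i\<in>{1..J}. if x = m(i := m i + 1) then p m * a i else 0)
     + (\<Sum>j\<in>{1..J}. \<Sum>i\<in>{1..J}.
        if i \<noteq> j \<and> 0 < m j \<and> x = m(j := m j - 1, i := m i + 1) then p m * (s j (m j) * rt j i) else 0)
     + (\<Sum>j\<in>{1..J}. if 0 < m j \<and> x = m(j := m j - 1) then p m * (s j (m j) * rt j 0) else 0))"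
    by (simp add: jackson_q_def distrib_left sum_distrib_left mult_if0)
  then show ?thesis unfolding IN_def using has_sum_add[OF has_sum_add[OF h1 h2] h3] by simp
qed

lemma jq_diag: "jackson_q J a s rt n n = 0"
proof -
  have f1: "\<And>i. (n = n(i := n i + 1)) = False" by (metis upd_ne n_not_Suc_n Suc_eq_plus1)
  moreover have f2: "\<And>i j. (i \<noteq> j \<and> 0 < n j \<and> n = n(j := n j - 1, i := n i + 1)) = False"
    by (metis upd_ne n_not_Suc_n Suc_eq_plus1)
  moreover have f3: "\<And>j. (0 < n j \<and> n = n(j := n j - 1)) = False" by (metis upd_ne diff_less less_irrefl zero_less_one)
  show ?thesis unfolding jackson_q_def by (simp only: f1 f2 f3 if_False sum.neutral_const add_0)
qed



context jnet begin

definition aa where "aa i = bt * lam * ra 0 i"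
definition ss where "ss j k = \<gamma> j * \<mu> j k"
definition nf where "nf j k = node_factor \<eta> \<mu> j k"
definition piphi where "piphi \<phi> n = (\<Prod>j\<in>W. nf j (n j)) * \<phi> (\<lambda>l. if l \<in> B then n l else 0)"

lemma q_eq: "jackson_q_gamma J lam \<gamma> \<mu> ra = jackson_q J aa ss ra"
  by (simp add: jackson_q_gamma_def aa_def[abs_def] ss_def[abs_def])

lemma nf_step: "j \<in> {1..J} \<Longrightarrow> nf j (k + 1) * \<mu> j (k + 1) = \<eta> j * nf j k"
proof -
  assume j: "j \<in> {1..J}"
  have mp: "0 < \<mu> j (k + 1)" using mu_pos j by auto
  have "nf j (k + 1) = (\<Prod>l\<in>{1..k}. \<eta> j / \<mu> j l) * (\<eta> j / \<mu> j (k + 1)) / normC \<eta> \<mu> j"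
    by (simp add: nf_def node_factor_def prod.cl_ivl_Suc)
  then show ?thesis using mp by (simp add: nf_def node_factor_def field_simps)
qed

end


context jnet begin

lemma fW: "finite W" by (simp add: Wset_def)

lemma U1:
  assumes j: "j \<in> {1..J}"
  shows "piphi \<phi> (y(j := y j + 1)) * (\<gamma> j * \<mu> j (y j + 1)) = G j * piphi \<phi> y"
proof (cases "j \<in> B")
  case True then show ?thesis by (simp add: gamma_B G_def)
next
  case False
  then have jW: "j \<in> W" using j by (auto simp: Wset_def)
  have r: "(\<lambda>l. if l \<in> B then (y(j := y j + 1)) l else 0) = (\<lambda>l. if l \<in> B then y l else 0)"
    using False by auto
  have p1: "(\<Prod>l\<in>W. nf l ((y(j := y j + 1)) l)) = nf j (y j + 1) * (\<Prod>l\<in>W - {j}. nf l (y l))"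
  proof -
    have "(\<Prod>l\<in>W - {j}. nf l ((y(j := y j + 1)) l)) = (\<Prod>l\<in>W - {j}. nf l (y l))"
      by (rule prod.cong) auto
    then show ?thesis by (subst prod.remove[OF fW jW]) simp
  qed
  have p2: "(\<Prod>l\<in>W. nf l (y l)) = nf j (y j) * (\<Prod>l\<in>W - {j}. nf l (y l))"
    by (rule prod.remove[OF fW jW])
  show ?thesis
    unfolding piphi_def r p1 p2 G_def using nf_step[OF j, of "y j"]
    by (simp add: algebra_simps)
qed

lemma U1': "j \<in> {1..J} \<Longrightarrow> 0 < x j \<Longrightarrow>
  piphi \<phi> (x(j := x j - 1)) * G j = piphi \<phi> x * (\<gamma> j * \<mu> j (x j))"
proof -
  assume j: "j \<in> {1..J}" and xj: "0 < x j"
  have e: "(x(j := x j - 1))(j := (x(j := x j - 1)) j + 1) = x" using xj by auto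
  have "x j - 1 + 1 = x j" using xj by simp
  then show ?thesis using U1[OF j, of \<phi> "x(j := x j - 1)"] e by (simp add: mult.commute)
qed

end


context jnet begin

lemma balance_id: "IN J aa ss ra (piphi \<phi>) x = piphi \<phi> x * OUT J aa ss ra x"
proof -
  let ?p = "piphi \<phi>"
  let ?I = "{1..J::nat}"
  have A: "(if i \<noteq> j \<and> 0 < x i then ?p (x(i := x i - 1, j := x j + 1)) * (ss j (x j + 1) * ra j i) else 0)
     = (if i \<noteq> j \<and> 0 < x i then G j * ?p (x(i := x i - 1)) * ra j i else 0)" if j: "j \<in> ?I" for i j
  proof (cases "i \<noteq> j \<and> 0 < x i")
    case True
    let ?y = "x(i := x i - 1)"
    have yj: "?y j = x j" using True by simp
    have "x(i := x i - 1, j := x j + 1) = ?y(j := ?y j + 1)" using yj by simp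
    then have "?p (x(i := x i - 1, j := x j + 1)) * (ss j (x j + 1)) = G j * ?p ?y"
      using U1[OF j, of \<phi> ?y] yj by (simp add: ss_def)
    then show ?thesis using True by (simp add: mult.assoc[symmetric])
  next
    case False then show ?thesis by (simp only: if_not_P if_False)
  qed
  have B2: "(\<Sum>j\<in>?I. \<Sum>i\<in>?I. if i \<noteq> j \<and> 0 < x i then G j * ?p (x(i := x i - 1)) * ra j i else 0)
     = (\<Sum>i\<in>?I. if 0 < x i then ?p (x(i := x i - 1)) * (\<Sum>j\<in>?I. if j \<noteq> i then G j * ra j i else 0) else 0)"
  proof -
    have "(\<Sum>j\<in>?I. \<Sum>i\<in>?I. if i \<noteq> j \<and> 0 < x i then G j * ?p (x(i := x i - 1)) * ra j i else 0)
      = (\<Sum>i\<in>?I. \<Sum>j\<in>?I. if i \<noteq> j \<and> 0 < x i then G j * ?p (x(i := x i - 1)) * ra j i else 0)"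
      by (rule sum.swap)
    also have "\<dots> = (\<Sum>i\<in>?I. if 0 < x i then ?p (x(i := x i - 1)) * (\<Sum>j\<in>?I. if j \<noteq> i then G j * ra j i else 0) else 0)"
    proof (rule sum.cong[OF refl])
      fix i
      show "(\<Sum>j\<in>?I. if i \<noteq> j \<and> 0 < x i then G j * ?p (x(i := x i - 1)) * ra j i else 0)
        = (if 0 < x i then ?p (x(i := x i - 1)) * (\<Sum>j\<in>?I. if j \<noteq> i then G j * ra j i else 0) else 0)"
        by (cases "0 < x i") (auto simp: sum_distrib_left intro!: sum.cong)
    qed
    finally show ?thesis .
  qed
  have C: "(if 0 < x i then ?p (x(i := x i - 1)) * aa i else 0)
     + (if 0 < x i then ?p (x(i := x i - 1)) * (\<Sum>j\<in>?I. if j \<noteq> i then G j * ra j i else 0) else 0)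
     = (if 0 < x i then ?p x * (\<gamma> i * \<mu> i (x i)) * (1 - ra i i) else 0)" if i: "i \<in> ?I" for i
  proof (cases "0 < x i")
    case True
    have split: "(\<Sum>j\<in>?I. G j * ra j i) = G i * ra i i + (\<Sum>j\<in>?I. if j \<noteq> i then G j * ra j i else 0)"
    proof -
      have "(\<Sum>j\<in>?I. G j * ra j i) = G i * ra i i + (\<Sum>j\<in>?I - {i}. G j * ra j i)"
        using i by (simp add: sum.remove)
      also have "(\<Sum>j\<in>?I - {i}. G j * ra j i) = (\<Sum>j\<in>?I. if j \<noteq> i then G j * ra j i else 0)"
        unfolding sum.inter_filter[OF finite_atLeastAtMost, symmetric] by (rule sum.cong) auto
      finally show ?thesis .
    qed
    have t: "aa i + (\<Sum>j\<in>?I. if j \<noteq> i then G j * ra j i else 0) = G i * (1 - ra i i)"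
      using traffic_j[OF i] split by (simp add: aa_def algebra_simps)
    have "?p (x(i := x i - 1)) * aa i + ?p (x(i := x i - 1)) * (\<Sum>j\<in>?I. if j \<noteq> i then G j * ra j i else 0)
       = ?p (x(i := x i - 1)) * (aa i + (\<Sum>j\<in>?I. if j \<noteq> i then G j * ra j i else 0))"
      by (simp only: distrib_left)
    also have "\<dots> = (?p (x(i := x i - 1)) * G i) * (1 - ra i i)"
      by (simp only: t mult.assoc)
    also have "\<dots> = ?p x * (\<gamma> i * \<mu> i (x i)) * (1 - ra i i)"
      using U1'[where j = i and x = x and \<phi> = \<phi>, OF i True] by simp
    finally show ?thesis using True by simp
  qed simp
  have D: "(\<Sum>i\<in>?I. if i \<noteq> j \<and> 0 < x j then ss j (x j) * ra j i else 0)
      + (if 0 < x j then ss j (x j) * ra j 0 else 0)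
     = (if 0 < x j then ss j (x j) * (1 - ra j j) else 0)" if j: "j \<in> ?I" for j
  proof (cases "0 < x j")
    case True
    have row: "ra j 0 + (\<Sum>i\<in>?I. ra j i) = 1" using ra_row[of j] j by (simp add: sum0J)
    have "(\<Sum>i\<in>?I. ra j i) = ra j j + (\<Sum>i\<in>?I - {j}. ra j i)"
      using j by (simp add: sum.remove)
    moreover have "(\<Sum>i\<in>?I - {j}. ra j i) = (\<Sum>i\<in>?I. if i \<noteq> j then ra j i else 0)"
      unfolding sum.inter_filter[OF finite_atLeastAtMost, symmetric] by (rule sum.cong) auto
    ultimately have "(\<Sum>i\<in>?I. if i \<noteq> j then ra j i else 0) + ra j 0 = 1 - ra j j"
      using row by simp
    then have e1: "ss j (x j) * ((\<Sum>i\<in>?I. if i \<noteq> j then ra j i else 0) + ra j 0) = ss j (x j) * (1 - ra j j)"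
      by simp
    have e2: "(\<Sum>i\<in>?I. if i \<noteq> j \<and> 0 < x j then ss j (x j) * ra j i else 0)
        = ss j (x j) * (\<Sum>i\<in>?I. if i \<noteq> j then ra j i else 0)"
      unfolding sum_distrib_left by (rule sum.cong) (use True in auto)
    show ?thesis using True e1 unfolding e2 by (simp add: distrib_left)
  qed simp
  have Ea: "(\<Sum>i\<in>?I. aa i) = bt * lam * (1 - ra 0 0)"
  proof -
    have "ra 0 0 + (\<Sum>i\<in>?I. ra 0 i) = 1" using ra_row[of 0] by (simp add: sum0J)
    then have s1: "(\<Sum>i\<in>?I. ra 0 i) = 1 - ra 0 0" by simp
    have "(\<Sum>i\<in>?I. aa i) = bt * lam * (\<Sum>i\<in>?I. ra 0 i)" by (simp add: aa_def sum_distrib_left)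
    then show ?thesis unfolding s1 .
  qed
  have E3: "(\<Sum>j\<in>?I. ?p (x(j := x j + 1)) * (ss j (x j + 1) * ra j 0)) = ?p x * (bt * lam * (1 - ra 0 0))"
  proof -
    have "(\<Sum>j\<in>?I. ?p (x(j := x j + 1)) * (ss j (x j + 1) * ra j 0)) = (\<Sum>j\<in>?I. ?p x * (G j * ra j 0))"
    proof (rule sum.cong[OF refl])
      fix j assume j: "j \<in> ?I"
      show "?p (x(j := x j + 1)) * (ss j (x j + 1) * ra j 0) = ?p x * (G j * ra j 0)"
        using U1[OF j, of \<phi> x] by (simp add: ss_def algebra_simps)
    qed
    also have "\<dots> = ?p x * (\<Sum>j\<in>?I. G j * ra j 0)" by (simp add: sum_distrib_left)
    also have "(\<Sum>j\<in>?I. G j * ra j 0) = bt * lam - bt * lam * ra 0 0" using traffic_0 by linarith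
    also have "bt * lam - bt * lam * ra 0 0 = bt * lam * (1 - ra 0 0)" by (simp add: right_diff_distrib)
    finally show ?thesis .
  qed
  have IN1: "IN J aa ss ra ?p x = (\<Sum>i\<in>?I. if 0 < x i then ?p x * (\<gamma> i * \<mu> i (x i)) * (1 - ra i i) else 0)
      + ?p x * (bt * lam * (1 - ra 0 0))"
  proof -
    have "IN J aa ss ra ?p x = (\<Sum>i\<in>?I. if 0 < x i then ?p (x(i := x i - 1)) * aa i else 0)
      + (\<Sum>i\<in>?I. if 0 < x i then ?p (x(i := x i - 1)) * (\<Sum>j\<in>?I. if j \<noteq> i then G j * ra j i else 0) else 0)
      + ?p x * (bt * lam * (1 - ra 0 0))"
    proof -
      have A2: "(\<Sum>j\<in>?I. \<Sum>i\<in>?I. if i \<noteq> j \<and> 0 < x i then ?p (x(i := x i - 1, j := x j + 1)) * (ss j (x j + 1) * ra j i) else 0)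
        = (\<Sum>j\<in>?I. \<Sum>i\<in>?I. if i \<noteq> j \<and> 0 < x i then G j * ?p (x(i := x i - 1)) * ra j i else 0)"
      proof (rule sum.cong[OF refl])
        fix j assume j: "j \<in> ?I"
        show "(\<Sum>i\<in>?I. if i \<noteq> j \<and> 0 < x i then ?p (x(i := x i - 1, j := x j + 1)) * (ss j (x j + 1) * ra j i) else 0)
          = (\<Sum>i\<in>?I. if i \<noteq> j \<and> 0 < x i then G j * ?p (x(i := x i - 1)) * ra j i else 0)"
          by (rule sum.cong[OF refl]) (rule A[OF j])
      qed
      show ?thesis unfolding IN_def E3 A2 B2 ..
    qed
    also have "\<dots> = (\<Sum>i\<in>?I. if 0 < x i then ?p x * (\<gamma> i * \<mu> i (x i)) * (1 - ra i i) else 0)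
      + ?p x * (bt * lam * (1 - ra 0 0))"
      unfolding add.assoc[symmetric] sum.distrib[symmetric]
      by (rule arg_cong2[where f = "(+)"], rule sum.cong[OF refl], rule C) auto
    finally show ?thesis .
  qed
  have OUT1: "OUT J aa ss ra x = bt * lam * (1 - ra 0 0) + (\<Sum>j\<in>?I. if 0 < x j then ss j (x j) * (1 - ra j j) else 0)"
    unfolding OUT_def Ea add.assoc sum.distrib[symmetric]
    by (rule arg_cong2[where f = "(+)"], simp, rule sum.cong[OF refl], rule D) auto
  have "(\<Sum>i\<in>?I. if 0 < x i then ?p x * (\<gamma> i * \<mu> i (x i)) * (1 - ra i i) else 0)
     = ?p x * (\<Sum>j\<in>?I. if 0 < x j then ss j (x j) * (1 - ra j j) else 0)"
    unfolding sum_distrib_left by (rule sum.cong) (auto simp: ss_def)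
  then show ?thesis unfolding IN1 OUT1 by (simp add: distrib_left)
qed

end


definition Dset :: "nat set \<Rightarrow> (nat \<Rightarrow> nat) set" where
  "Dset K = {n. \<forall>l. l \<notin> K \<longrightarrow> n l = 0}"

lemma has_sum_prod_step:
  fixes f :: "nat \<Rightarrow> real" and g :: "(nat \<Rightarrow> nat) \<Rightarrow> real"
  assumes fnn: "\<And>k. 0 \<le> f k" and fs: "(f has_sum a) UNIV"
    and gnn: "\<And>n. n \<in> Dset K \<Longrightarrow> 0 \<le> g n" and gs: "(g has_sum b) (Dset K)" and j: "j \<notin> K"
  shows "((\<lambda>n. f (n j) * g (n(j := 0))) has_sum (a * b)) (Dset (insert j K))"
proof -
  have bij: "bij_betw (\<lambda>(k, m). m(j := k)) (UNIV \<times> Dset K) (Dset (insert j K))"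
  proof (rule bij_betwI[where g = "\<lambda>n. (n j, n(j := 0))"])
    show "(\<lambda>(k, m). m(j := k)) \<in> UNIV \<times> Dset K \<rightarrow> Dset (insert j K)"
      by (auto simp: Dset_def)
    show "(\<lambda>n. (n j, n(j := 0))) \<in> Dset (insert j K) \<rightarrow> UNIV \<times> Dset K"
      by (auto simp: Dset_def)
    show "(\<lambda>n. (n j, n(j := 0))) ((\<lambda>(k, m). m(j := k)) x) = x" if "x \<in> UNIV \<times> Dset K" for x
      using that j by (auto simp: Dset_def fun_eq_iff)
    show "(\<lambda>(k, m). m(j := k)) ((\<lambda>n. (n j, n(j := 0))) y) = y" if "y \<in> Dset (insert j K)" for y
      by auto
  qed
  have inner: "((\<lambda>m. f k * g m) has_sum (f k * b)) (Dset K)" for k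
    by (rule has_sum_cmult_right[OF gs])
  have outer: "((\<lambda>k. f k * b) has_sum (a * b)) UNIV"
    by (rule has_sum_cmult_left[OF fs])
  have summ: "(\<lambda>(k, m). f k * g m) summable_on Sigma UNIV (\<lambda>_. Dset K)"
    by (rule summable_on_SigmaI[where g = "\<lambda>k. f k * b"])
       (use inner has_sum_imp_summable[OF outer] fnn gnn in \<open>auto intro: mult_nonneg_nonneg\<close>)
  have "((\<lambda>(k, m). f k * g m) has_sum (a * b)) (Sigma UNIV (\<lambda>_. Dset K))"
    by (rule has_sum_SigmaI[OF _ outer summ]) (use inner in auto)
  then have h1: "((\<lambda>(k, m). f k * g m) has_sum (a * b)) (UNIV \<times> Dset K)" by simp
  have "((\<lambda>x. (\<lambda>n. f (n j) * g (n(j := 0))) ((\<lambda>(k, m). m(j := k)) x)) has_sum (a * b)) (UNIV \<times> Dset K)"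
  proof -
    have "((\<lambda>(k, m). f k * g m) has_sum (a * b)) (UNIV \<times> Dset K) \<longleftrightarrow>
      ((\<lambda>x. (\<lambda>n. f (n j) * g (n(j := 0))) ((\<lambda>(k, m). m(j := k)) x)) has_sum (a * b)) (UNIV \<times> Dset K)"
    proof (rule has_sum_cong)
      fix x :: "nat \<times> (nat \<Rightarrow> nat)" assume "x \<in> UNIV \<times> Dset K"
      then obtain k m where x: "x = (k, m)" and m: "m \<in> Dset K" by auto
      have "m(j := k, j := 0) = m" using m j by (auto simp: Dset_def fun_eq_iff)
      then show "(\<lambda>(k, m). f k * g m) x = (\<lambda>n. f (n j) * g (n(j := 0))) ((\<lambda>(k, m). m(j := k)) x)"
        using x by simp
    qed
    with h1 show ?thesis by simp
  qed
  then show ?thesis using has_sum_reindex_bij_betw[OF bij] by blast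
qed

lemma has_sum_prod_Dset:
  fixes f :: "nat \<Rightarrow> nat \<Rightarrow> real" and g :: "(nat \<Rightarrow> nat) \<Rightarrow> real"
  assumes K: "finite K" and disj: "K \<inter> K' = {}"
    and fnn: "\<And>j k. j \<in> K \<Longrightarrow> 0 \<le> f j k" and fs: "\<And>j. j \<in> K \<Longrightarrow> (f j has_sum 1) UNIV"
    and gnn: "\<And>n. n \<in> Dset K' \<Longrightarrow> 0 \<le> g n" and gs: "(g has_sum c) (Dset K')"
  shows "((\<lambda>n. (\<Prod>j\<in>K. f j (n j)) * g (\<lambda>l. if l \<in> K' then n l else 0)) has_sum c) (Dset (K \<union> K'))"
  using K disj fnn fs
proof (induction K rule: finite_induct)
  case empty
  have "(g has_sum c) (Dset K') \<longleftrightarrow>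
     ((\<lambda>n. (\<Prod>j\<in>{}. f j (n j)) * g (\<lambda>l. if l \<in> K' then n l else 0)) has_sum c) (Dset K')"
  proof (rule has_sum_cong)
    fix n assume "n \<in> Dset K'"
    then have "(\<lambda>l. if l \<in> K' then n l else 0) = n" by (auto simp: Dset_def fun_eq_iff)
    then show "g n = (\<Prod>j\<in>{}. f j (n j)) * g (\<lambda>l. if l \<in> K' then n l else 0)" by simp
  qed
  with gs show ?case by simp
next
  case (insert j K)
  let ?h = "\<lambda>n. (\<Prod>j\<in>K. f j (n j)) * g (\<lambda>l. if l \<in> K' then n l else 0)"
  have IH: "(?h has_sum c) (Dset (K \<union> K'))" using insert by auto
  have hnn: "0 \<le> ?h n" if "n \<in> Dset (K \<union> K')" for n
  proof (rule mult_nonneg_nonneg)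
    show "0 \<le> (\<Prod>j\<in>K. f j (n j))" using insert.prems by (intro prod_nonneg) auto
    show "0 \<le> g (\<lambda>l. if l \<in> K' then n l else 0)" by (rule gnn) (auto simp: Dset_def)
  qed
  have jn: "j \<notin> K \<union> K'" using insert by auto
  have st: "((\<lambda>n. f j (n j) * ?h (n(j := 0))) has_sum (1 * c)) (Dset (insert j (K \<union> K')))"
    by (rule has_sum_prod_step[OF _ _ hnn IH jn]) (use insert.prems in auto)
  have "((\<lambda>n. f j (n j) * ?h (n(j := 0))) has_sum c) (Dset (insert j K \<union> K')) \<longleftrightarrow>
     ((\<lambda>n. (\<Prod>j\<in>insert j K. f j (n j)) * g (\<lambda>l. if l \<in> K' then n l else 0)) has_sum c) (Dset (insert j K \<union> K'))"
  proof (rule has_sum_cong)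
    fix n :: "nat \<Rightarrow> nat"
    have p: "(\<Prod>i\<in>K. f i ((n(j := 0)) i)) = (\<Prod>i\<in>K. f i (n i))"
      by (rule prod.cong) (use insert.hyps in auto)
    have r: "(\<lambda>l. if l \<in> K' then (n(j := 0)) l else 0) = (\<lambda>l. if l \<in> K' then n l else 0)"
      using jn by auto
    show "f j (n j) * ?h (n(j := 0)) = (\<Prod>j\<in>insert j K. f j (n j)) * g (\<lambda>l. if l \<in> K' then n l else 0)"
      unfolding p r using insert.hyps by (simp add: mult.assoc)
  qed
  with st show ?case by simp
qed

context jnet begin

lemma normC_pos: "j \<in> {1..J} \<Longrightarrow> 0 < normC \<eta> \<mu> j"
proof -
  assume j: "j \<in> {1..J}"
  have nn: "0 \<le> (\<Prod>k\<in>{1..n}. \<eta> j / \<mu> j k)" for n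
    using eta_pos[of j] mu_pos j by (intro prod_nonneg) (auto intro!: divide_nonneg_pos less_imp_le)
  show ?thesis unfolding normC_def
    by (rule suminf_pos2[where i = 0]) (use C_fin j nn in auto)
qed

lemma nf_nonneg: "j \<in> {1..J} \<Longrightarrow> 0 \<le> nf j k"
  unfolding nf_def node_factor_def using normC_pos eta_pos[of j] mu_pos
  by (intro divide_nonneg_pos prod_nonneg) (auto intro!: divide_nonneg_pos less_imp_le)

lemma nf_pos: "j \<in> {1..J} \<Longrightarrow> 0 < nf j k"
  unfolding nf_def node_factor_def using normC_pos eta_pos[of j] mu_pos
  by (intro divide_pos_pos prod_pos) (auto intro!: divide_pos_pos)

lemma nf_has_sum: "j \<in> {1..J} \<Longrightarrow> (nf j has_sum 1) UNIV"
proof -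
  assume j: "j \<in> {1..J}"
  have "(\<lambda>n. \<Prod>k\<in>{1..n}. \<eta> j / \<mu> j k) sums normC \<eta> \<mu> j"
    unfolding normC_def using C_fin j by (simp add: summable_sums)
  then have "(\<lambda>n. (\<Prod>k\<in>{1..n}. \<eta> j / \<mu> j k) / normC \<eta> \<mu> j) sums (normC \<eta> \<mu> j / normC \<eta> \<mu> j)"
    by (rule sums_divide)
  then have "nf j sums 1" using normC_pos[OF j] by (simp add: nf_def[abs_def] node_factor_def)
  then show ?thesis by (rule sums_nonneg_imp_has_sum) (rule nf_nonneg[OF j])
qed

lemma S_Dset: "S = Dset {1..J}" by (simp add: jstates_def Dset_def)

lemma piphi_has_sum:
  assumes pnn: "\<And>m. m \<in> Dset B \<Longrightarrow> 0 \<le> \<phi> m" and ps: "(\<phi> has_sum 1) (Dset B)"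
  shows "(piphi \<phi> has_sum 1) S"
proof -
  have "((\<lambda>n. (\<Prod>j\<in>W. nf j (n j)) * \<phi> (\<lambda>l. if l \<in> B then n l else 0)) has_sum 1) (Dset (W \<union> B))"
    by (rule has_sum_prod_Dset[OF fW _ _ _ pnn ps])
       (use BW_disj nf_nonneg nf_has_sum in \<open>auto simp: W_eq\<close>)
  moreover have "W \<union> B = {1..J}" using BW_union by auto
  ultimately show ?thesis by (simp add: S_Dset piphi_def[abs_def])
qed

lemma piphi_nonneg:
  assumes pnn: "\<And>m. m \<in> Dset B \<Longrightarrow> 0 \<le> \<phi> m"
  shows "0 \<le> piphi \<phi> n"
  unfolding piphi_def
  by (intro mult_nonneg_nonneg prod_nonneg pnn) (auto simp: Dset_def W_eq intro: nf_nonneg)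

lemma outrate_eq: "x \<in> S \<Longrightarrow> outrate S (jackson_q_gamma J lam \<gamma> \<mu> ra) x = OUT J aa ss ra x"
  unfolding outrate_def q_eq using jq_out by (blast intro: infsumI)

lemma piphi_stationary:
  assumes pnn: "\<And>m. m \<in> Dset B \<Longrightarrow> 0 \<le> \<phi> m" and ps: "(\<phi> has_sum 1) (Dset B)"
  shows "stationary_dist S (jackson_q_gamma J lam \<gamma> \<mu> ra) (piphi \<phi>)"
  unfolding stationary_dist_def
proof (intro conjI ballI)
  show "0 \<le> piphi \<phi> x" for x by (rule piphi_nonneg[OF pnn])
  show "(piphi \<phi> has_sum 1) S" by (rule piphi_has_sum[OF pnn ps])
  fix x assume x: "x \<in> S"
  have "((\<lambda>y. piphi \<phi> y * jackson_q J aa ss ra y x) has_sum IN J aa ss ra (piphi \<phi>) x) (S - {x})"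
    by (rule jq_in[OF x])
  then show "((\<lambda>y. piphi \<phi> y * jackson_q_gamma J lam \<gamma> \<mu> ra y x) has_sum
      (piphi \<phi> x * outrate S (jackson_q_gamma J lam \<gamma> \<mu> ra) x)) (S - {x})"
    by (simp add: q_eq outrate_eq[OF x, unfolded q_eq] balance_id)
qed

end


lemma closed_reach:
  assumes cl: "closed_set S q C" and r: "(x, y) \<in> (trans_rel S q)\<^sup>*" and x: "x \<in> C"
  shows "y \<in> C"
  using r x
proof (induction rule: rtrancl_induct)
  case base then show ?case by simp
next
  case (step y z)
  then have "y \<in> C" "z \<in> S" "0 < q y z" by (auto simp: trans_rel_def)
  then show ?case using cl unfolding closed_set_def by force
qed

context jnet begin

definition phi0 where "phi0 m = (\<Prod>j\<in>B. nf j (m j))"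

lemma fB: "finite B" using B_sub finite_subset by blast

lemma phi0_nonneg: "0 \<le> phi0 m"
  unfolding phi0_def
proof (rule prod_nonneg)
  fix j assume "j \<in> B"
  then have "j \<in> {1..J}" using B_sub by auto
  then show "0 \<le> nf j (m j)" by (rule nf_nonneg)
qed

lemma phi0_has_sum: "(phi0 has_sum 1) (Dset B)"
proof -
  have D0: "Dset {} = {\<lambda>_. 0}" by (auto simp: Dset_def)
  have g: "((\<lambda>_. 1::real) has_sum 1) (Dset {})" unfolding D0 by (simp add: has_sum_finiteI)
  have "((\<lambda>n. (\<Prod>j\<in>B. nf j (n j)) * (\<lambda>_. 1::real) (\<lambda>l. if l \<in> {} then n l else 0)) has_sum 1) (Dset (B \<union> {}))"
    by (rule has_sum_prod_Dset[OF fB _ _ _ _ g]) (use B_sub nf_nonneg nf_has_sum in auto)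
  then show ?thesis by (simp add: phi0_def[abs_def])
qed

lemma xi_eq: "jackson_xi J \<eta> \<mu> = piphi phi0"
proof
  fix n
  have "jackson_xi J \<eta> \<mu> n = (\<Prod>j\<in>W \<union> B. nf j (n j))"
    unfolding jackson_xi_def nf_def using BW_union by (simp add: Un_commute)
  also have "\<dots> = (\<Prod>j\<in>W. nf j (n j)) * (\<Prod>j\<in>B. nf j (n j))"
    by (rule prod.union_disjoint[OF fW fB]) (use BW_disj in auto)
  also have "(\<Prod>j\<in>B. nf j (n j)) = phi0 (\<lambda>l. if l \<in> B then n l else 0)"
    unfolding phi0_def by (rule prod.cong) auto
  finally show "jackson_xi J \<eta> \<mu> n = piphi phi0 n" by (simp add: piphi_def)
qed

lemma xi_stationary: "stationary_dist S (jackson_q_gamma J lam \<gamma> \<mu> ra) (jackson_xi J \<eta> \<mu>)"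
  unfolding xi_eq by (rule piphi_stationary[OF phi0_nonneg phi0_has_sum])

definition Cb where "Cb b = {n \<in> S. \<forall>j\<in>B. n j = b j}"

lemma closed_Cb: "closed_set S (jackson_q_gamma J lam \<gamma> \<mu> ra) (Cb b)"
  unfolding closed_set_def
proof (intro conjI ballI)
  show "Cb b \<subseteq> S" by (auto simp: Cb_def)
  fix x y assume x: "x \<in> Cb b" and y: "y \<in> S - Cb b"
  then obtain l where l: "l \<in> B" "y l \<noteq> x l" by (auto simp: Cb_def)
  have lJ: "l \<in> {1..J}" using l B_sub by auto
  have t1: "(if y = x(i := x i + 1) then aa i else 0) = 0" for i
  proof (cases "i \<in> B")
    case True then show ?thesis using ra_into_B(1)[OF True] by (simp add: aa_def)
  next
    case False
    then have li: "l \<noteq> i" using l by auto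
    then have "y = x(i := x i + 1) \<Longrightarrow> False" using l by auto
    then show ?thesis by auto
  qed
  have t2: "(if i \<noteq> j \<and> 0 < x j \<and> y = x(j := x j - 1, i := x i + 1) then ss j (x j) * ra j i else 0) = 0"
    if i: "i \<in> {1..J}" and j: "j \<in> {1..J}" for i j
  proof (cases "j \<in> B")
    case True then show ?thesis by (simp add: ss_def gamma_B)
  next
    case jB: False
    then have jW: "j \<in> W" using j by (auto simp: Wset_def)
    show ?thesis
    proof (cases "i \<in> B")
      case True then show ?thesis using ra_into_B(2)[OF True jW] by simp
    next
      case False
      then have "l \<noteq> i" "l \<noteq> j" using l jB by auto
      then have "y = x(j := x j - 1, i := x i + 1) \<Longrightarrow> False" using l by auto
      then show ?thesis by auto
    qed
  qed
  have t3: "(if 0 < x j \<and> y = x(j := x j - 1) then ss j (x j) * ra j 0 else 0) = 0" for j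
  proof (cases "j \<in> B")
    case True then show ?thesis by (simp add: ss_def gamma_B)
  next
    case False
    then have "l \<noteq> j" using l by auto
    then have "y = x(j := x j - 1) \<Longrightarrow> False" using l by auto
    then show ?thesis by auto
  qed
  show "jackson_q_gamma J lam \<gamma> \<mu> ra x y = 0"
    unfolding q_eq jackson_q_def using t1 t2 t3 by simp
qed

lemma zero_S: "(\<lambda>_. 0) \<in> S" by (simp add: jstates_def)

lemma not_irred:
  assumes "B \<noteq> {}"
  shows "\<not> irreducible_ctmc S (jackson_q_gamma J lam \<gamma> \<mu> ra)"
proof
  assume irr: "irreducible_ctmc S (jackson_q_gamma J lam \<gamma> \<mu> ra)"
  obtain j0 where j0: "j0 \<in> B" using assms by auto
  have j0J: "j0 \<in> {1..J}" using j0 B_sub by auto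
  let ?y = "(\<lambda>_. 0::nat)(j0 := 1)"
  have yS: "?y \<in> S" using jstates_upd[OF zero_S j0J] .
  have "((\<lambda>_. 0), ?y) \<in> (trans_rel S (jackson_q_gamma J lam \<gamma> \<mu> ra))\<^sup>*"
    using irr zero_S yS by (simp add: irreducible_ctmc_def)
  moreover have "(\<lambda>_. 0) \<in> Cb (\<lambda>_. 0)" using zero_S by (simp add: Cb_def)
  ultimately have "?y \<in> Cb (\<lambda>_. 0)" using closed_reach[OF closed_Cb] by blast
  then have "\<forall>j\<in>B. ?y j = 0" by (simp add: Cb_def)
  then have "?y j0 = 0" using j0 by blast
  then show False by simp
qed

lemma infinite_Cb:
  assumes "B \<noteq> {}"
  shows "infinite {Cb b | b. b \<in> S}"
proof
  assume fin: "finite {Cb b | b. b \<in> S}"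
  obtain j0 where j0: "j0 \<in> B" using assms by auto
  have j0J: "j0 \<in> {1..J}" using j0 B_sub by auto
  let ?f = "\<lambda>k::nat. Cb ((\<lambda>_. 0::nat)(j0 := k))"
  have "range ?f \<subseteq> {Cb b | b. b \<in> S}" using jstates_upd[OF zero_S j0J] by blast
  then have "finite (range ?f)" using fin finite_subset by blast
  moreover have "inj ?f"
  proof (rule injI)
    fix k k' assume e: "?f k = ?f k'"
    have "(\<lambda>_. 0::nat)(j0 := k) \<in> ?f k" using jstates_upd[OF zero_S j0J] by (simp add: Cb_def)
    then have "(\<lambda>_. 0::nat)(j0 := k) \<in> ?f k'" using e by simp
    then have "\<forall>j\<in>B. ((\<lambda>_. 0::nat)(j0 := k)) j = ((\<lambda>_. 0::nat)(j0 := k')) j" by (simp add: Cb_def)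
    then have "((\<lambda>_. 0::nat)(j0 := k)) j0 = ((\<lambda>_. 0::nat)(j0 := k')) j0" using j0 by blast
    then show "k = k'" by simp
  qed
  ultimately show False using finite_imageD by (metis infinite_UNIV_nat)
qed

end


context jnet begin

lemma OUT_eq: "OUT J aa ss ra x = bt * lam * (1 - ra 0 0) + (\<Sum>j\<in>{1..J}. if 0 < x j then ss j (x j) * (1 - ra j j) else 0)"
proof -
  let ?I = "{1..J::nat}"
  have D: "(\<Sum>i\<in>?I. if i \<noteq> j \<and> 0 < x j then ss j (x j) * ra j i else 0)
      + (if 0 < x j then ss j (x j) * ra j 0 else 0)
     = (if 0 < x j then ss j (x j) * (1 - ra j j) else 0)" if j: "j \<in> ?I" for j
  proof (cases "0 < x j")
    case True
    have row: "ra j 0 + (\<Sum>i\<in>?I. ra j i) = 1" using ra_row[of j] j by (simp add: sum0J)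
    have "(\<Sum>i\<in>?I. ra j i) = ra j j + (\<Sum>i\<in>?I - {j}. ra j i)"
      using j by (simp add: sum.remove)
    moreover have "(\<Sum>i\<in>?I - {j}. ra j i) = (\<Sum>i\<in>?I. if i \<noteq> j then ra j i else 0)"
      unfolding sum.inter_filter[OF finite_atLeastAtMost, symmetric] by (rule sum.cong) auto
    ultimately have "(\<Sum>i\<in>?I. if i \<noteq> j then ra j i else 0) + ra j 0 = 1 - ra j j"
      using row by simp
    then have e1: "ss j (x j) * ((\<Sum>i\<in>?I. if i \<noteq> j then ra j i else 0) + ra j 0) = ss j (x j) * (1 - ra j j)"
      by simp
    have e2: "(\<Sum>i\<in>?I. if i \<noteq> j \<and> 0 < x j then ss j (x j) * ra j i else 0)
        = ss j (x j) * (\<Sum>i\<in>?I. if i \<noteq> j then ra j i else 0)"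
      unfolding sum_distrib_left by (rule sum.cong) (use True in auto)
    show ?thesis using True e1 unfolding e2 by (simp add: distrib_left)
  qed simp
  have Ea: "(\<Sum>i\<in>?I. aa i) = bt * lam * (1 - ra 0 0)"
  proof -
    have "ra 0 0 + (\<Sum>i\<in>?I. ra 0 i) = 1" using ra_row[of 0] by (simp add: sum0J)
    then have s1: "(\<Sum>i\<in>?I. ra 0 i) = 1 - ra 0 0" by simp
    have "(\<Sum>i\<in>?I. aa i) = bt * lam * (\<Sum>i\<in>?I. ra 0 i)" by (simp add: aa_def sum_distrib_left)
    then show ?thesis unfolding s1 .
  qed
  show ?thesis
    unfolding OUT_def Ea add.assoc sum.distrib[symmetric]
    by (rule arg_cong2[where f = "(+)"], simp, rule sum.cong[OF refl], rule D) auto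
qed

lemma aa_nonneg: "i \<in> {1..J} \<Longrightarrow> 0 \<le> aa i"
  unfolding aa_def using beta_pos lam_pos ra_nonneg[of 0 i] by simp

lemma ss_nonneg: "j \<in> {1..J} \<Longrightarrow> 0 < k \<Longrightarrow> 0 \<le> ss j k"
proof -
  assume j: "j \<in> {1..J}" and k: "0 < k"
  have "0 \<le> \<gamma> j" using gamma_nonneg j by auto
  moreover have "0 < \<mu> j k" using mu_pos j k by auto
  ultimately show ?thesis unfolding ss_def by simp
qed

lemma q_nonneg: "0 \<le> jackson_q_gamma J lam \<gamma> \<mu> ra z y"
  unfolding q_eq jackson_q_def
  by (intro add_nonneg_nonneg sum_nonneg)
     (auto intro!: aa_nonneg mult_nonneg_nonneg ss_nonneg ra_nonneg)

end


context jnet begin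
lemma succ_fin: "finite {y \<in> S. jackson_q_gamma J lam \<gamma> \<mu> ra z y \<noteq> 0}"
proof -
  define Tg where "Tg = (\<lambda>i. z(i := z i + 1)) ` {1..J} \<union> (\<lambda>(j, i). z(j := z j - 1, i := z i + 1)) ` ({1..J} \<times> {1..J})
     \<union> (\<lambda>j. z(j := z j - 1)) ` {1..J}"
  have "finite Tg" by (simp add: Tg_def)
  moreover have "{y \<in> S. jackson_q_gamma J lam \<gamma> \<mu> ra z y \<noteq> 0} \<subseteq> Tg"
  proof
    fix y assume "y \<in> {y \<in> S. jackson_q_gamma J lam \<gamma> \<mu> ra z y \<noteq> 0}"
    then have nz: "jackson_q J aa ss ra z y \<noteq> 0" by (simp add: q_eq)
    show "y \<in> Tg"
    proof (rule ccontr)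
      assume nT: "y \<notin> Tg"
      have s1: "(\<Sum>i\<in>{1..J}. if y = z(i := z i + 1) then aa i else 0) = 0"
        by (rule sum.neutral) (use nT in \<open>auto simp: Tg_def\<close>)
      have s2: "(\<Sum>j\<in>{1..J}. \<Sum>i\<in>{1..J}. if i \<noteq> j \<and> 0 < z j \<and> y = z(j := z j - 1, i := z i + 1)
          then ss j (z j) * ra j i else 0) = 0"
        by (intro sum.neutral ballI) (use nT in \<open>auto simp: Tg_def\<close>)
      have s3: "(\<Sum>j\<in>{1..J}. if 0 < z j \<and> y = z(j := z j - 1) then ss j (z j) * ra j 0 else 0) = 0"
        by (rule sum.neutral) (use nT in \<open>auto simp: Tg_def\<close>)
      have "jackson_q J aa ss ra z y = 0" unfolding jackson_q_def s1 s2 s3 by simp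
      then show False using nz by simp
    qed
  qed
  ultimately show ?thesis by (rule finite_subset[rotated])
qed

end


context jnet begin
lemma ra0_pos: "irreducible_matrix J ra \<Longrightarrow> 0 < (\<Sum>i\<in>{1..J}. ra 0 i)"
proof -
  assume irr: "irreducible_matrix J ra"
  define R where "R = {(a, b). a \<in> {0..J} \<and> b \<in> {0..J} \<and> 0 < ra a b}"
  have all: "\<forall>i\<in>{0..J}. \<forall>j\<in>{0..J}. (i, j) \<in> R\<^sup>*"
    using irr unfolding irreducible_matrix_def R_def .
  have "(0, 1) \<in> R\<^sup>*" by (rule bspec[OF bspec[OF all]]) (use J1 in auto)
  then have r01: "(0, 1) \<in> (R - Id)\<^sup>*" by (simp only: rtrancl_r_diff_Id)
  obtain c where c: "(0, c) \<in> R - Id"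
  proof (rule converse_rtranclE[OF r01])
    assume "(0::nat) = 1" then show ?thesis by simp
  next
    fix y assume "(0, y) \<in> R - Id" then show ?thesis by (rule that)
  qed
  then have cJ: "c \<in> {1..J}" and pc: "0 < ra 0 c" by (auto simp: R_def)
  have "ra 0 c \<le> (\<Sum>i\<in>{1..J}. ra 0 i)"
    by (rule member_le_sum[OF cJ]) (use ra_nonneg in auto)
  then show ?thesis using pc by simp
qed

end


context jnet begin

abbreviation qq where "qq \<equiv> jackson_q_gamma J lam \<gamma> \<mu> ra"
abbreviation xi where "xi \<equiv> jackson_xi J \<eta> \<mu>"

lemma xi_has_sum: "(xi has_sum 1) S"
  using xi_stationary by (simp add: stationary_dist_def)

lemma xi_nonneg: "0 \<le> xi z"
  unfolding xi_eq by (rule piphi_nonneg[OF phi0_nonneg])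

lemma xi_pos: "0 < xi z"
  unfolding jackson_xi_def using nf_pos by (intro prod_pos) (auto simp: nf_def)

lemma hj_has_sum:
  assumes j: "j \<in> {1..J}"
  shows "((\<lambda>z. if 0 < z j then xi z * ss j (z j) else 0) has_sum G j) S"
proof -
  let ?h = "\<lambda>z. if 0 < z j then xi z * ss j (z j) else 0"
  let ?g = "\<lambda>y::nat \<Rightarrow> nat. y(j := y j + 1)"
  have inj: "inj_on ?g S"
  proof (rule inj_onI)
    fix y y' assume "?g y = ?g y'"
    then have "\<forall>l. (?g y) l = (?g y') l" by simp
    then show "y = y'" unfolding fun_eq_iff by (metis fun_upd_apply add_right_cancel)
  qed
  have comp: "(?h \<circ> ?g) y = G j * xi y" for y
    using U1[OF j, of phi0 y] by (simp add: xi_eq ss_def)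
  have "((\<lambda>y. G j * xi y) has_sum (G j * 1)) S" by (rule has_sum_cmult_right[OF xi_has_sum])
  moreover have e: "(?h \<circ> ?g) = (\<lambda>y. G j * xi y)" by (rule ext) (rule comp)
  ultimately have "((?h \<circ> ?g) has_sum G j) S" by simp
  then have h1: "(?h has_sum G j) (?g ` S)" using has_sum_reindex[OF inj] by blast
  have sub: "?g ` S \<subseteq> S" using jstates_upd[OF _ j] by auto
  have "(?h has_sum G j) (?g ` S) \<longleftrightarrow> (?h has_sum G j) S"
  proof (rule has_sum_cong_neutral)
    fix z assume z: "z \<in> S - ?g ` S"
    show "?h z = 0"
    proof (cases "0 < z j")
      case True
      then have "z = ?g (z(j := z j - 1))" by auto
      moreover have "z(j := z j - 1) \<in> S" using z jstates_upd[OF _ j] by auto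
      ultimately have "z \<in> ?g ` S" by blast
      then show ?thesis using z by simp
    qed simp
  qed (use sub in auto)
  then show ?thesis using h1 by simp
qed

lemma OUT_nonneg_terms:
  "0 \<le> bt * lam * (1 - ra 0 0)" "j \<in> {1..J} \<Longrightarrow> 0 \<le> (if 0 < x j then ss j (x j) * (1 - ra j j) else 0)"
proof -
  have r0: "ra 0 0 \<le> 1"
  proof -
    have "ra 0 0 + (\<Sum>i\<in>{1..J}. ra 0 i) = 1" using ra_row[of 0] by (simp add: sum0J)
    moreover have "0 \<le> (\<Sum>i\<in>{1..J}. ra 0 i)" by (rule sum_nonneg) (use ra_nonneg in auto)
    ultimately show ?thesis by linarith
  qed
  show "0 \<le> bt * lam * (1 - ra 0 0)" using beta_pos lam_pos r0 by simp
  assume j: "j \<in> {1..J}"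
  have rj: "ra j j \<le> 1"
  proof -
    have "ra j j \<le> (\<Sum>i\<in>{0..J}. ra j i)" by (rule member_le_sum) (use j ra_nonneg in auto)
    then show ?thesis using ra_row[of j] j by simp
  qed
  show "0 \<le> (if 0 < x j then ss j (x j) * (1 - ra j j) else 0)"
    using ss_nonneg[OF j] rj by simp
qed

lemma OUT_nonneg: "0 \<le> OUT J aa ss ra x"
  unfolding OUT_eq using OUT_nonneg_terms by (intro add_nonneg_nonneg sum_nonneg) auto

lemma nu_summ: "(\<lambda>z. xi z * outrate S qq z) summable_on S"
proof -
  define c0 where "c0 = bt * lam * (1 - ra 0 0)"
  define F where "F z = c0 * xi z + (\<Sum>j\<in>{1..J}. if 0 < z j then xi z * ss j (z j) else 0)" for z
  have Fs: "(F has_sum (c0 * 1 + (\<Sum>j\<in>{1..J}. G j))) S"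
    unfolding F_def[abs_def]
    by (rule has_sum_add[OF has_sum_cmult_right[OF xi_has_sum] has_sum_finsum])
       (auto intro: hj_has_sum)
  have le: "xi z * OUT J aa ss ra z \<le> F z" for z
  proof -
    have "xi z * OUT J aa ss ra z = c0 * xi z + (\<Sum>j\<in>{1..J}. xi z * (if 0 < z j then ss j (z j) * (1 - ra j j) else 0))"
      unfolding OUT_eq c0_def by (simp add: distrib_left sum_distrib_left algebra_simps)
    also have "\<dots> \<le> F z"
      unfolding F_def
    proof (rule add_left_mono, rule sum_mono)
      fix j assume j: "j \<in> {1..J}"
      have "ra j j \<ge> 0" using ra_nonneg j by auto
      moreover have "ra j j \<le> 1"
      proof -
        have "ra j j \<le> (\<Sum>i\<in>{0..J}. ra j i)" by (rule member_le_sum) (use j ra_nonneg in auto)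
        then show ?thesis using ra_row[of j] j by simp
      qed
      ultimately show "xi z * (if 0 < z j then ss j (z j) * (1 - ra j j) else 0) \<le> (if 0 < z j then xi z * ss j (z j) else 0)"
        using xi_nonneg[of z] ss_nonneg[OF j, of "z j"]
        by (auto intro!: mult_left_mono mult_right_le_one_le simp: mult.assoc[symmetric])
    qed
    finally show ?thesis .
  qed
  have "(\<lambda>z. xi z * OUT J aa ss ra z) summable_on S"
    by (rule summable_on_comparison_test[OF has_sum_imp_summable[OF Fs]])
       (use le xi_nonneg OUT_nonneg in auto)
  then show ?thesis
    by (rule summable_on_cong[THEN iffD1, rotated]) (simp add: outrate_eq)
qed

lemma pos_rec_all:
  assumes irr: "irreducible_matrix J ra"
  shows "\<forall>x\<in>S. positive_recurrent S qq x"
proof -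
  interpret jc: jumpchain S qq xi
  proof
    show "0 \<le> qq z y" for z y by (rule q_nonneg)
    show "qq z z = 0" for z by (simp add: q_eq jq_diag)
    show "finite {y \<in> S. qq z y \<noteq> 0}" for z by (rule succ_fin)
    show "0 < outrate S qq z" if z: "z \<in> S" for z
    proof -
      have "0 < bt * lam * (1 - ra 0 0)"
      proof -
        have "ra 0 0 + (\<Sum>i\<in>{1..J}. ra 0 i) = 1" using ra_row[of 0] by (simp add: sum0J)
        then have "0 < 1 - ra 0 0" using ra0_pos[OF irr] by linarith
        then show ?thesis using beta_pos lam_pos by simp
      qed
      moreover have "0 \<le> (\<Sum>j\<in>{1..J}. if 0 < z j then ss j (z j) * (1 - ra j j) else 0)"
        using OUT_nonneg_terms by (intro sum_nonneg) auto
      ultimately show ?thesis unfolding outrate_eq[OF z] OUT_eq by linarith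
    qed
    show "0 \<le> xi z" for z by (rule xi_nonneg)
    show "((\<lambda>z. xi z * qq z y) has_sum (xi y * outrate S qq y)) (S - {y})" if "y \<in> S" for y
      using xi_stationary that by (simp add: stationary_dist_def)
    show "(\<lambda>z. xi z * outrate S qq z) summable_on S" by (rule nu_summ)
    show "xi summable_on S" using xi_has_sum by (rule has_sum_imp_summable)
  qed
  show ?thesis using jc.pos_rec xi_pos by blast
qed

end


context jnet begin

lemma le_sum_term:
  fixes f :: "nat \<Rightarrow> real"
  assumes "i \<in> A" "finite A" "\<And>x. x \<in> A \<Longrightarrow> 0 \<le> f x" "c \<le> f i"
  shows "c \<le> sum f A"
proof -
  have "f i \<le> sum f A" by (rule member_le_sum) (use assms in auto)
  then show ?thesis using assms(4) by linarith
qed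

abbreviation TT where "TT \<equiv> trans_rel S qq"

lemma q_ge_arr: "i \<in> {1..J} \<Longrightarrow> aa i \<le> qq x (x(i := x i + 1))"
proof -
  assume i: "i \<in> {1..J}"
  have "aa i \<le> (\<Sum>l\<in>{1..J}. if x(i := x i + 1) = x(l := x l + 1) then aa l else 0)"
    by (rule le_sum_term[OF i]) (auto intro: aa_nonneg)
  moreover have "0 \<le> (\<Sum>j\<in>{1..J}. \<Sum>l\<in>{1..J}. if l \<noteq> j \<and> 0 < x j \<and> x(i := x i + 1) = x(j := x j - 1, l := x l + 1)
       then ss j (x j) * ra j l else 0)"
    by (intro sum_nonneg) (auto intro!: mult_nonneg_nonneg ss_nonneg ra_nonneg)
  moreover have "0 \<le> (\<Sum>j\<in>{1..J}. if 0 < x j \<and> x(i := x i + 1) = x(j := x j - 1) then ss j (x j) * ra j 0 else 0)"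
    by (intro sum_nonneg) (auto intro!: mult_nonneg_nonneg ss_nonneg ra_nonneg)
  ultimately show ?thesis unfolding q_eq jackson_q_def by linarith
qed

lemma q_ge_move: "i \<in> {1..J} \<Longrightarrow> j \<in> {1..J} \<Longrightarrow> i \<noteq> j \<Longrightarrow> 0 < x j \<Longrightarrow>
   ss j (x j) * ra j i \<le> qq x (x(j := x j - 1, i := x i + 1))"
proof -
  assume i: "i \<in> {1..J}" and j: "j \<in> {1..J}" and ij: "i \<noteq> j" and xj: "0 < x j"
  let ?t = "x(j := x j - 1, i := x i + 1)"
  have "ss j (x j) * ra j i \<le> (\<Sum>l\<in>{1..J}. if l \<noteq> j \<and> 0 < x j \<and> ?t = x(j := x j - 1, l := x l + 1)
       then ss j (x j) * ra j l else 0)"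
    by (rule le_sum_term[OF i]) (use ij xj j in \<open>auto intro!: mult_nonneg_nonneg ss_nonneg ra_nonneg\<close>)
  also have "\<dots> \<le> (\<Sum>j'\<in>{1..J}. \<Sum>l\<in>{1..J}. if l \<noteq> j' \<and> 0 < x j' \<and> ?t = x(j' := x j' - 1, l := x l + 1)
       then ss j' (x j') * ra j' l else 0)"
    by (rule member_le_sum[where i = j, OF j]) (auto intro!: sum_nonneg mult_nonneg_nonneg ss_nonneg ra_nonneg)
  finally have m: "ss j (x j) * ra j i \<le> (\<Sum>j'\<in>{1..J}. \<Sum>l\<in>{1..J}. if l \<noteq> j' \<and> 0 < x j' \<and> ?t = x(j' := x j' - 1, l := x l + 1)
       then ss j' (x j') * ra j' l else 0)" .
  moreover have "0 \<le> (\<Sum>l\<in>{1..J}. if ?t = x(l := x l + 1) then aa l else 0)"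
    by (intro sum_nonneg) (auto intro: aa_nonneg)
  moreover have "0 \<le> (\<Sum>j\<in>{1..J}. if 0 < x j \<and> ?t = x(j := x j - 1) then ss j (x j) * ra j 0 else 0)"
    by (intro sum_nonneg) (auto intro!: mult_nonneg_nonneg ss_nonneg ra_nonneg)
  ultimately show ?thesis unfolding q_eq jackson_q_def by linarith
qed

lemma q_ge_dep: "j \<in> {1..J} \<Longrightarrow> 0 < x j \<Longrightarrow> ss j (x j) * ra j 0 \<le> qq x (x(j := x j - 1))"
proof -
  assume j: "j \<in> {1..J}" and xj: "0 < x j"
  let ?t = "x(j := x j - 1)"
  have "ss j (x j) * ra j 0 \<le> (\<Sum>l\<in>{1..J}. if 0 < x l \<and> ?t = x(l := x l - 1) then ss l (x l) * ra l 0 else 0)"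
    by (rule le_sum_term[OF j]) (use xj in \<open>auto intro!: mult_nonneg_nonneg ss_nonneg ra_nonneg\<close>)
  moreover have "0 \<le> (\<Sum>l\<in>{1..J}. if ?t = x(l := x l + 1) then aa l else 0)"
    by (intro sum_nonneg) (auto intro: aa_nonneg)
  moreover have "0 \<le> (\<Sum>j'\<in>{1..J}. \<Sum>l\<in>{1..J}. if l \<noteq> j' \<and> 0 < x j' \<and> ?t = x(j' := x j' - 1, l := x l + 1)
       then ss j' (x j') * ra j' l else 0)"
    by (intro sum_nonneg) (auto intro!: mult_nonneg_nonneg ss_nonneg ra_nonneg)
  ultimately show ?thesis unfolding q_eq jackson_q_def by linarith
qed

end


context jnet begin

definition Rr where "Rr = {(a, b). a \<in> {0..J} \<and> b \<in> {0..J} \<and> 0 < ra a b}"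

lemma T_step: "x \<in> S \<Longrightarrow> y \<in> S \<Longrightarrow> x \<noteq> y \<Longrightarrow> 0 < qq x y \<Longrightarrow> (x, y) \<in> TT\<^sup>*"
  by (rule r_into_rtrancl) (simp add: trans_rel_def)

lemma ss_pos: "B = {} \<Longrightarrow> j \<in> {1..J} \<Longrightarrow> 0 < k \<Longrightarrow> 0 < ss j k"
proof -
  assume B0: "B = {}" and j: "j \<in> {1..J}" and k: "0 < k"
  have "j \<in> W" using j B0 BW_union by auto
  then have "0 < \<gamma> j" by (rule gamma_W)
  moreover have "0 < \<mu> j k" using mu_pos j k by auto
  ultimately show ?thesis by (simp add: ss_def)
qed

lemma dep_reach:
  assumes B0: "B = {}" and r: "(j, 0) \<in> Rr\<^sup>*"
  shows "\<forall>x\<in>S. j \<in> {1..J} \<longrightarrow> 0 < x j \<longrightarrow> (x, x(j := x j - 1)) \<in> TT\<^sup>*"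
  using r
proof (induction rule: converse_rtrancl_induct)
  case base then show ?case by simp
next
  case (step y z)
  have yz: "y \<in> {0..J}" "z \<in> {0..J}" "0 < ra y z" using step.hyps(1) by (auto simp: Rr_def)
  show ?case
  proof (intro ballI impI)
    fix x assume x: "x \<in> S" and y: "y \<in> {1..J}" and xy: "0 < x y"
    show "(x, x(y := x y - 1)) \<in> TT\<^sup>*"
    proof (cases "z = 0")
      case True
      have "0 < ss y (x y) * ra y 0" using ss_pos[OF B0 y xy] yz True by simp
      also have "\<dots> \<le> qq x (x(y := x y - 1))" by (rule q_ge_dep[where j = y and x = x, OF y xy])
      moreover have ne: "x(y := x y - 1) \<noteq> x" by (rule upd_ne) (use xy in simp)
      ultimately show ?thesis
        by (intro T_step x jstates_upd[OF x y]) (use ne in auto)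
    next
      case z0: False
      show ?thesis
      proof (cases "z = y")
        case True then show ?thesis using step.IH x y xy by blast
      next
        case False
        then have zJ: "z \<in> {1..J}" using yz z0 by auto
        let ?x' = "x(y := x y - 1, z := x z + 1)"
        have x'S: "?x' \<in> S" by (intro jstates_upd x y zJ)
        have "0 < ss y (x y) * ra y z" using ss_pos[OF B0 y xy] yz by simp
        also have "\<dots> \<le> qq x ?x'" by (rule q_ge_move[where i = z and j = y and x = x, OF zJ y False xy])
        finally have "(x, ?x') \<in> TT\<^sup>*"
          by (intro T_step x x'S) (use upd_ne[of "x z + 1" x z "x(y := x y - 1)"] in auto)
        moreover have "(?x', ?x'(z := ?x' z - 1)) \<in> TT\<^sup>*"
        proof -
          have "0 < ?x' z" by simp
          then show ?thesis using step.IH x'S zJ by blast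
        qed
        moreover have "?x'(z := ?x' z - 1) = x(y := x y - 1)" using False by (auto simp: fun_eq_iff)
        ultimately show ?thesis by (metis rtrancl_trans)
      qed
    qed
  qed
qed

lemma arr_reach:
  assumes B0: "B = {}" and r: "(0, i) \<in> Rr\<^sup>*"
  shows "\<forall>x\<in>S. i \<in> {1..J} \<longrightarrow> (x, x(i := x i + 1)) \<in> TT\<^sup>*"
  using r
proof (induction rule: rtrancl_induct)
  case base then show ?case by simp
next
  case (step y z)
  have yz: "y \<in> {0..J}" "z \<in> {0..J}" "0 < ra y z" using step.hyps(2) by (auto simp: Rr_def)
  show ?case
  proof (intro ballI impI)
    fix x assume x: "x \<in> S" and z: "z \<in> {1..J}"
    show "(x, x(z := x z + 1)) \<in> TT\<^sup>*"
    proof (cases "y = 0")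
      case True
      have "0 < aa z" using True yz beta_pos lam_pos by (simp add: aa_def)
      also have "\<dots> \<le> qq x (x(z := x z + 1))" by (rule q_ge_arr[where i = z and x = x, OF z])
      finally show ?thesis
        by (intro T_step x jstates_upd[OF x z]) (use upd_ne[of "x z + 1" x z x] in auto)
    next
      case y0: False
      show ?thesis
      proof (cases "y = z")
        case True then show ?thesis using step.IH x z by blast
      next
        case False
        then have yJ: "y \<in> {1..J}" using yz y0 by auto
        let ?x'' = "x(y := x y + 1)"
        have x''S: "?x'' \<in> S" by (intro jstates_upd x yJ)
        have a: "(x, ?x'') \<in> TT\<^sup>*" using step.IH x yJ by blast
        let ?t = "?x''(y := ?x'' y - 1, z := ?x'' z + 1)"
        have te: "?t = x(z := x z + 1)" using False by (auto simp: fun_eq_iff)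
        have py: "0 < ?x'' y" by simp
        have "0 < ss y (?x'' y) * ra y z" using ss_pos[OF B0 yJ py] yz by simp
        also have "\<dots> \<le> qq ?x'' ?t" by (rule q_ge_move[where i = z and j = y and x = ?x'', OF z yJ _ py]) (use False in auto)
        finally have "(?x'', ?t) \<in> TT\<^sup>*"
          by (intro T_step x''S) (use jstates_upd[OF x z] te False in \<open>auto simp: fun_eq_iff\<close>)
        then show ?thesis using a te by (metis rtrancl_trans)
      qed
    qed
  qed
qed

definition tot where "tot x = (\<Sum>l\<in>{1..J}. x l)"

lemma tot_upd: fixes x :: "nat \<Rightarrow> nat" shows "j \<in> {1..J} \<Longrightarrow> tot (x(j := v)) + x j = tot x + v"
proof -
  assume j: "j \<in> {1..J}"
  have "tot (x(j := v)) = v + (\<Sum>l\<in>{1..J} - {j}. x l)"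
    unfolding tot_def by (subst sum.remove[OF _ j]) auto
  moreover have "tot x = x j + (\<Sum>l\<in>{1..J} - {j}. x l)"
    unfolding tot_def by (rule sum.remove[OF _ j]) auto
  ultimately show ?thesis by simp
qed

lemma S_zero: "x \<in> S \<Longrightarrow> \<forall>j\<in>{1..J}. x j = 0 \<Longrightarrow> x = (\<lambda>_. 0)"
  by (auto simp: jstates_def fun_eq_iff)

lemma to_zero:
  assumes B0: "B = {}" and irr: "irreducible_matrix J ra"
  shows "x \<in> S \<Longrightarrow> (x, \<lambda>_. 0) \<in> TT\<^sup>*"
proof (induction "tot x" arbitrary: x rule: less_induct)
  case less
  show ?case
  proof (cases "\<forall>j\<in>{1..J}. x j = 0")
    case True then show ?thesis using S_zero[OF less.prems] by simp
  next
    case False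
    then obtain j where j: "j \<in> {1..J}" and xj: "0 < x j" by auto
    have "(j, 0) \<in> Rr\<^sup>*" using irr j unfolding irreducible_matrix_def Rr_def by auto
    then have "(x, x(j := x j - 1)) \<in> TT\<^sup>*" using dep_reach[OF B0] less.prems j xj by blast
    moreover have "tot (x(j := x j - 1)) < tot x" using tot_upd[OF j, of x "x j - 1"] xj by simp
    then have "(x(j := x j - 1), \<lambda>_. 0) \<in> TT\<^sup>*" using less.hyps jstates_upd[OF less.prems j] by blast
    ultimately show ?thesis by (metis rtrancl_trans)
  qed
qed

lemma from_zero:
  assumes B0: "B = {}" and irr: "irreducible_matrix J ra"
  shows "y \<in> S \<Longrightarrow> (\<lambda>_. 0, y) \<in> TT\<^sup>*"
proof (induction "tot y" arbitrary: y rule: less_induct)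
  case less
  show ?case
  proof (cases "\<forall>j\<in>{1..J}. y j = 0")
    case True then show ?thesis using S_zero[OF less.prems] by simp
  next
    case False
    then obtain j where j: "j \<in> {1..J}" and yj: "0 < y j" by auto
    let ?y' = "y(j := y j - 1)"
    have y'S: "?y' \<in> S" using jstates_upd[OF less.prems j] .
    have "tot ?y' < tot y" using tot_upd[OF j, of y "y j - 1"] yj by simp
    then have a: "(\<lambda>_. 0, ?y') \<in> TT\<^sup>*" using less.hyps y'S by blast
    have "(0, j) \<in> Rr\<^sup>*" using irr j unfolding irreducible_matrix_def Rr_def by auto
    then have "(?y', ?y'(j := ?y' j + 1)) \<in> TT\<^sup>*" using arr_reach[OF B0] y'S j by blast
    moreover have "?y'(j := ?y' j + 1) = y" using yj by auto
    ultimately show ?thesis using a by (metis rtrancl_trans)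
  qed
qed

lemma irred_ctmc:
  assumes B0: "B = {}" and irr: "irreducible_matrix J ra"
  shows "irreducible_ctmc S qq"
  unfolding irreducible_ctmc_def
  using to_zero[OF B0 irr] from_zero[OF B0 irr] by (metis rtrancl_trans)

end


theorem corollary3p9:
  fixes J :: nat
    and lamj :: "nat \<Rightarrow> real"          \<comment> \<open>external arrival rates \<lambda>_j\<close>
    and \<mu> :: "nat \<Rightarrow> nat \<Rightarrow> real"      \<comment> \<open>service intensities \<mu>_j(n)\<close>
    and r :: "nat \<Rightarrow> nat \<Rightarrow> real"      \<comment> \<open>extended routing matrix on {0..J}\<close>
    and \<eta> :: "nat \<Rightarrow> real"
    and \<gamma> :: "nat \<Rightarrow> real"
    and ra :: "nat \<Rightarrow> nat \<Rightarrow> real"     \<comment> \<open>the matrix r^(alpha)\<close>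
  defines "lam \<equiv> (\<Sum>j\<in>{1..J}. lamj j)"
  assumes lamj_nonneg: "\<forall>j\<in>{1..J}. 0 \<le> lamj j"
    and lam_pos: "0 < lam"
    and mu_pos: "\<forall>j\<in>{1..J}. \<forall>n\<ge>1. 0 < \<mu> j n"
    and r_stoch: "stochastic_on J r"
    and r_irred: "irreducible_matrix J r"
    and r_0j: "\<forall>j\<in>{1..J}. r 0 j = lamj j / lam"
    and r_00: "r 0 0 = 0"
    and eta_0: "\<eta> 0 = lam"
    and eta_traffic: "\<forall>j\<in>{0..J}. \<eta> j = (\<Sum>i\<in>{0..J}. \<eta> i * r i j)"
    and X_ergodic: "ergodic_ctmc (jstates J) (jackson_q J (\<lambda>i. lam * r 0 i) \<mu> r)"
    and C_fin: "\<forall>j\<in>{1..J}. summable (\<lambda>n. \<Prod>k\<in>{1..n}. \<eta> j / \<mu> j k)"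
    and gamma_nonneg: "\<forall>j\<in>{1..J}. 0 \<le> \<gamma> j"
    and ra_stoch: "stochastic_on J ra"
    and ra_inv: "invariant_measure J ra (\<lambda>j. alpha J \<gamma> j * \<eta> j)"
  shows "stationary_dist (jstates J) (jackson_q_gamma J lam \<gamma> \<mu> ra) (jackson_xi J \<eta> \<mu>)
    \<and> (Bset J \<gamma> = {} \<and> irreducible_matrix J ra \<longrightarrow>
         ergodic_ctmc (jstates J) (jackson_q_gamma J lam \<gamma> \<mu> ra))
    \<and> (Bset J \<gamma> \<noteq> {} \<longrightarrow>
         \<not> irreducible_ctmc (jstates J) (jackson_q_gamma J lam \<gamma> \<mu> ra)
       \<and> infinite {{n \<in> jstates J. \<forall>j\<in>Bset J \<gamma>. n j = b j} | b. b \<in> jstates J}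
       \<and> (\<forall>b\<in>jstates J. closed_set (jstates J) (jackson_q_gamma J lam \<gamma> \<mu> ra)
                            {n \<in> jstates J. \<forall>j\<in>Bset J \<gamma>. n j = b j})
       \<and> (\<forall>\<phi> :: (nat \<Rightarrow> nat) \<Rightarrow> real.
            (\<forall>m\<in>{m. \<forall>j. j \<notin> Bset J \<gamma> \<longrightarrow> m j = 0}. 0 \<le> \<phi> m)
            \<and> (\<phi> has_sum 1) {m. \<forall>j. j \<notin> Bset J \<gamma> \<longrightarrow> m j = 0}
            \<longrightarrow> stationary_dist (jstates J) (jackson_q_gamma J lam \<gamma> \<mu> ra)
                  (\<lambda>n. (\<Prod>j\<in>Wset J \<gamma>. node_factor \<eta> \<mu> j (n j))
                        * \<phi> (\<lambda>j. if j \<in> Bset J \<gamma> then n j else 0))))"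
proof -
  have J1: "1 \<le> J"
  proof (rule ccontr)
    assume "\<not> 1 \<le> J"
    then have "J = 0" by simp
    then have "lam = 0" by (simp add: lam_def)
    then show False using lam_pos by simp
  qed
  interpret jnet J lam \<mu> r \<eta> \<gamma> ra
    by (unfold_locales) (use J1 lam_pos mu_pos r_stoch r_irred eta_0 eta_traffic C_fin gamma_nonneg ra_stoch ra_inv in auto)
  have setD: "{m. \<forall>j. j \<notin> Bset J \<gamma> \<longrightarrow> m j = 0} = Dset B" by (simp add: Dset_def)
  have fun_eq: "(\<lambda>n. (\<Prod>j\<in>Wset J \<gamma>. node_factor \<eta> \<mu> j (n j)) * \<phi> (\<lambda>j. if j \<in> Bset J \<gamma> then n j else 0))
      = piphi \<phi>" for \<phi> :: "(nat \<Rightarrow> nat) \<Rightarrow> real"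
    by (simp add: piphi_def[abs_def] nf_def)
  have part3: "\<not> irreducible_ctmc (jstates J) (jackson_q_gamma J lam \<gamma> \<mu> ra)
       \<and> infinite {{n \<in> jstates J. \<forall>j\<in>Bset J \<gamma>. n j = b j} | b. b \<in> jstates J}
       \<and> (\<forall>b\<in>jstates J. closed_set (jstates J) (jackson_q_gamma J lam \<gamma> \<mu> ra)
                            {n \<in> jstates J. \<forall>j\<in>Bset J \<gamma>. n j = b j})
       \<and> (\<forall>\<phi> :: (nat \<Rightarrow> nat) \<Rightarrow> real.
            (\<forall>m\<in>{m. \<forall>j. j \<notin> Bset J \<gamma> \<longrightarrow> m j = 0}. 0 \<le> \<phi> m)
            \<and> (\<phi> has_sum 1) {m. \<forall>j. j \<notin> Bset J \<gamma> \<longrightarrow> m j = 0}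
            \<longrightarrow> stationary_dist (jstates J) (jackson_q_gamma J lam \<gamma> \<mu> ra)
                  (\<lambda>n. (\<Prod>j\<in>Wset J \<gamma>. node_factor \<eta> \<mu> j (n j))
                        * \<phi> (\<lambda>j. if j \<in> Bset J \<gamma> then n j else 0)))"
    if Bne: "Bset J \<gamma> \<noteq> {}"
  proof (intro conjI allI impI ballI)
    show "\<not> irreducible_ctmc (jstates J) (jackson_q_gamma J lam \<gamma> \<mu> ra)" by (rule not_irred[OF Bne])
    show "infinite {{n \<in> jstates J. \<forall>j\<in>Bset J \<gamma>. n j = b j} | b. b \<in> jstates J}"
      using infinite_Cb[OF Bne] by (simp add: Cb_def)
    show "closed_set (jstates J) (jackson_q_gamma J lam \<gamma> \<mu> ra) {n \<in> jstates J. \<forall>j\<in>Bset J \<gamma>. n j = b j}" for b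
      using closed_Cb[of b] by (simp add: Cb_def)
    fix \<phi> :: "(nat \<Rightarrow> nat) \<Rightarrow> real"
    assume h: "(\<forall>m\<in>{m. \<forall>j. j \<notin> Bset J \<gamma> \<longrightarrow> m j = 0}. 0 \<le> \<phi> m)
            \<and> (\<phi> has_sum 1) {m. \<forall>j. j \<notin> Bset J \<gamma> \<longrightarrow> m j = 0}"
    have pnn: "\<And>m. m \<in> Dset B \<Longrightarrow> 0 \<le> \<phi> m" using h setD by auto
    have ps: "(\<phi> has_sum 1) (Dset B)" using h setD by simp
    show "stationary_dist (jstates J) (jackson_q_gamma J lam \<gamma> \<mu> ra)
                  (\<lambda>n. (\<Prod>j\<in>Wset J \<gamma>. node_factor \<eta> \<mu> j (n j))
                        * \<phi> (\<lambda>j. if j \<in> Bset J \<gamma> then n j else 0))"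
      unfolding fun_eq by (rule piphi_stationary[OF pnn ps])
  qed
  have part2: "ergodic_ctmc (jstates J) (jackson_q_gamma J lam \<gamma> \<mu> ra)"
    if "Bset J \<gamma> = {} \<and> irreducible_matrix J ra"
    unfolding ergodic_ctmc_def using irred_ctmc pos_rec_all that by blast
  show ?thesis using xi_stationary part2 part3 by blast
qed



end
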